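(* There exists a stably correct CRN protocol $\Pi=(\mathcal{S},\mathcal{R})$ such that $\operatorname{RT}_{\mathrm{stab}}^{\Pi}(n)=O(\log n)$, but if the minimum in the definition of $\operatorname{RT}_{\mathrm{stab}}^{\Pi}(n)$ is restricted to runtime policies $\varrho$ with $\varrho(\mathbf{c})\subseteq\mathcal{E}(\mathbf{c})$ for every configuration $\mathbf{c}$, then the resulting quantity is $\Omega(n)$.
   Context: $\mathcal{E}(\mathbf{c})$ denotes the set of reactions that escape from the strongly connected component of $\mathbf{c}$ in the configuration digraph $D^{\Pi}$ (which has an $\alpha$-labeled edge $\mathbf{c}\to\alpha(\mathbf{c})$ for each configuration $\mathbf{c}$ and each $\alpha\in\operatorname{app}(\mathbf{c})$); a reaction $\alpha$ escapes from a component $S$ if $\alpha\in\operatorname{app}(\mathbf{c})$ and $\alpha(\mathbf{c})\notin S$ for all $\mathbf{c}\in S$. CRN model: $\Pi=(\mathcal{S},\mathcal{R})$, finite species set, finite reaction set $\mathcal{R}\subset\mathbb{N}^{\mathcal{S}}\times\mathbb{N}^{\mathcal{S}}$; reactions $(\mathbf{r},\mathbf{p})$ with $\|\mathbf{r}\|_1\in\{1,2\}$, $\|\mathbf{r}\|_1\le\|\mathbf{p}\|_1$; every $\mathbf{r}$ with $1\le\|\mathbf{r}\|_1\le2$ has a nonempty set $\mathcal{R}(\mathbf{r})$ of reactions; void reactions ($\mathbf{r}=\mathbf{p}$) alone in their $\mathcal{R}(\mathbf{r})$; $\operatorname{NV}(\mathcal{R})$ non-void; finite density. Configurations $\mathbf{c}\in\mathbb{N}^{\mathcal{S}}$,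 $\|\mathbf{c}\|_1\ge1$; applicability $\mathbf{r}\le\mathbf{c}$, result $\alpha(\mathbf{c})=\mathbf{c}-\mathbf{r}+\mathbf{p}$; $\operatorname{app}(\mathbf{c})$; reachability $\stackrel{*}{\rightharpoonup}$; $\mathrm{stab}(Z)=\{\mathbf{c}\in Z:\mathbf{c}\stackrel{*}{\rightharpoonup}\mathbf{c}'\Rightarrow\mathbf{c}'\in Z\}$. Weakly fair executions $\langle\mathbf{c}^t,\alpha^t\rangle$: every reaction applicable at step $t$ is later scheduled or becomes inapplicable. Correctness is w.r.t. an interface $\mathcal{I}=(\mathcal{U},\mu,\mathcal{C})$ giving target sets $Z_{\mathcal{I}}(\mathbf{c}^0)=\{\mathbf{c}:(\mu(\mathbf{c}^0),\mu(\mathbf{c}))\in\mathcal{C}\}$ and valid initial configurations (those with $Z_{\mathcal{I}}(\mathbf{c}^0)\ne\emptyset$); stably correct: every weakly fair valid execution reaches $\mathrm{stab}(Z_{\mathcal{I}}(\mathbf{c}^0))$, first such step = stabilization step. Runtime: stochastic scheduler with volume $\varphi=\Theta(n)$, $n=\|\mathbf{c}^0\|_1$; propensity $\pi_{\mathbf{c}}(\alpha)=\mathbf{c}(A)/|\mathcal{R}(\mathbf{r})|$ ($\mathbf{r}=A$), $\frac1\varphi\binom{\mathbf{c}(A)}2/|\mathcal{R}(\mathbf{r})|$ ($\mathbf{r}=2A$), $\frac1\varphi\mathbf{c}(A)\mathbf{c}(B)/|\mathcal{R}(\mathbf{r})|$ ($\mathbf{r}=A+B$); step time span $1/\pi_{\mathbf{c}}(\mathcal{R})$.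 $\tau(\eta,t,Q)$ = least $s>t$ with $\alpha^{s-1}\in Q$ or every reaction of $Q$ inapplicable at some step in $[t,s]$. Runtime policy $\varrho(\mathbf{c})\subseteq\operatorname{NV}(\mathcal{R})$; skipping policy $\sigma(t)\ge t$; rounds $t(0)=0$, $t_e(i)=\sigma(t(i))$, $\mathbf{e}^i=\mathbf{c}^{t_e(i)}$, $t(i+1)=\tau(\eta,t_e(i),\varrho(\mathbf{e}^i))$; $\operatorname{TC}^{\varrho}(\mathbf{c})$ = expected total time span of the steps before $\tau(\eta_r,0,\varrho(\mathbf{c}))$ of a stochastic execution from $\mathbf{c}$; $\operatorname{RT}_{\mathrm{stab}}^{\varrho,\sigma}(\eta)=\sum_{i<i^*}\operatorname{TC}^{\varrho}(\mathbf{e}^i)$, $i^*=\min\{i:t(i)\ge t^*\}$; $\operatorname{RT}_{\mathrm{stab}}^{\Pi}(n)=\min_\varrho\max_{\eta,\sigma}\operatorname{RT}_{\mathrm{stab}}^{\varrho,\sigma}(\eta)$, max over weakly fair valid executions with initial molecular count $n$ and all skipping policies. *)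

theory Defs
  imports "HOL-Analysis.Analysis" "HOL-Library.Extended_Nat" "HOL-Library.Extended_Nonnegative_Real"
begin

text \<open>Species are natural numbers; a CRN is a finite species set S :: nat set together
with a finite reaction set R.  Vectors in N^S are functions nat => nat vanishing outside S.\<close>

type_synonym conf = "nat \<Rightarrow> nat"
type_synonym rxn = "conf \<times> conf"
type_synonym iface = "conf set \<times> (conf \<Rightarrow> conf) \<times> (conf \<times> conf) set"

definition supp_in :: "nat set \<Rightarrow> conf \<Rightarrow> bool" where
  "supp_in S c \<longleftrightarrow> (\<forall>s. s \<notin> S \<longrightarrow> c s = 0)"

definition norm1 :: "nat set \<Rightarrow> conf \<Rightarrow> nat" where
  "norm1 S c = (\<Sum>s\<in>S. c s)"

definition is_config :: "nat set \<Rightarrow> conf \<Rightarrow> bool" where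
  "is_config S c \<longleftrightarrow> supp_in S c \<and> norm1 S c \<ge> 1"

definition Rr :: "rxn set \<Rightarrow> conf \<Rightarrow> rxn set" where
  "Rr R r = {\<alpha> \<in> R. fst \<alpha> = r}"

definition NV :: "rxn set \<Rightarrow> rxn set" where
  "NV R = {\<alpha> \<in> R. fst \<alpha> \<noteq> snd \<alpha>}"

definition app :: "rxn set \<Rightarrow> conf \<Rightarrow> rxn set" where
  "app R c = {\<alpha> \<in> R. fst \<alpha> \<le> c}"

definition apply_rxn :: "rxn \<Rightarrow> conf \<Rightarrow> conf" where
  "apply_rxn \<alpha> c = (\<lambda>s. c s - fst \<alpha> s + snd \<alpha> s)"

definition step :: "rxn set \<Rightarrow> conf \<Rightarrow> conf \<Rightarrow> bool" where
  "step R c c' \<longleftrightarrow> (\<exists>\<alpha> \<in> app R c. c' = apply_rxn \<alpha> c)"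

definition reach :: "rxn set \<Rightarrow> conf \<Rightarrow> conf \<Rightarrow> bool" where
  "reach R = (step R)\<^sup>*\<^sup>*"

definition finite_density :: "nat set \<Rightarrow> rxn set \<Rightarrow> bool" where
  "finite_density S R \<longleftrightarrow> (\<exists>d::nat. \<forall>c c'. is_config S c \<and> reach R c c' \<longrightarrow> norm1 S c' \<le> d * norm1 S c)"

definition crn :: "nat set \<Rightarrow> rxn set \<Rightarrow> bool" where
  "crn S R \<longleftrightarrow> finite S \<and> finite R
    \<and> (\<forall>(r, p) \<in> R. supp_in S r \<and> supp_in S p \<and> norm1 S r \<in> {1, 2} \<and> norm1 S r \<le> norm1 S p)
    \<and> (\<forall>r. supp_in S r \<and> 1 \<le> norm1 S r \<and> norm1 S r \<le> 2 \<longrightarrow> Rr R r \<noteq> {})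
    \<and> (\<forall>r. (r, r) \<in> R \<longrightarrow> Rr R r = {(r, r)})
    \<and> finite_density S R"

definition scc :: "nat set \<Rightarrow> rxn set \<Rightarrow> conf \<Rightarrow> conf set" where
  "scc S R c = {c'. is_config S c' \<and> reach R c c' \<and> reach R c' c}"

definition escapes :: "rxn set \<Rightarrow> rxn \<Rightarrow> conf set \<Rightarrow> bool" where
  "escapes R \<alpha> Z \<longleftrightarrow> (\<forall>c \<in> Z. \<alpha> \<in> app R c \<and> apply_rxn \<alpha> c \<notin> Z)"

definition escaping :: "nat set \<Rightarrow> rxn set \<Rightarrow> conf \<Rightarrow> rxn set" where
  "escaping S R c = {\<alpha> \<in> R. escapes R \<alpha> (scc S R c)}"

definition is_exec :: "nat set \<Rightarrow> rxn set \<Rightarrow> (nat \<Rightarrow> conf) \<Rightarrow> (nat \<Rightarrow> rxn) \<Rightarrow> bool" where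
  "is_exec S R cs as \<longleftrightarrow> (\<forall>t. is_config S (cs t) \<and> as t \<in> app R (cs t) \<and> cs (Suc t) = apply_rxn (as t) (cs t))"

definition weakly_fair :: "rxn set \<Rightarrow> (nat \<Rightarrow> conf) \<Rightarrow> (nat \<Rightarrow> rxn) \<Rightarrow> bool" where
  "weakly_fair R cs as \<longleftrightarrow> (\<forall>t. \<forall>\<alpha> \<in> app R (cs t). \<exists>s \<ge> t. as s = \<alpha> \<or> \<alpha> \<notin> app R (cs s))"

definition interface :: "nat set \<Rightarrow> iface \<Rightarrow> bool" where
  "interface S I = (case I of (U, \<mu>, C) \<Rightarrow> (\<forall>c. is_config S c \<longrightarrow> \<mu> c \<in> U) \<and> C \<subseteq> U \<times> U)"

definition Z_I :: "nat set \<Rightarrow> iface \<Rightarrow> conf \<Rightarrow> conf set" where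
  "Z_I S I c0 = (case I of (U, \<mu>, C) \<Rightarrow> {c. is_config S c \<and> (\<mu> c0, \<mu> c) \<in> C})"

definition valid_init :: "nat set \<Rightarrow> iface \<Rightarrow> conf \<Rightarrow> bool" where
  "valid_init S I c0 \<longleftrightarrow> is_config S c0 \<and> Z_I S I c0 \<noteq> {}"

definition stab :: "rxn set \<Rightarrow> conf set \<Rightarrow> conf set" where
  "stab R Z = {c \<in> Z. \<forall>c'. reach R c c' \<longrightarrow> c' \<in> Z}"

definition stably_correct :: "nat set \<Rightarrow> rxn set \<Rightarrow> iface \<Rightarrow> bool" where
  "stably_correct S R I \<longleftrightarrow> (\<forall>cs as. is_exec S R cs as \<and> weakly_fair R cs as \<and> valid_init S I (cs 0)
      \<longrightarrow> (\<exists>t. cs t \<in> stab R (Z_I S I (cs 0))))"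

definition stab_step :: "nat set \<Rightarrow> rxn set \<Rightarrow> iface \<Rightarrow> (nat \<Rightarrow> conf) \<Rightarrow> nat" where
  "stab_step S R I cs = (LEAST t. cs t \<in> stab R (Z_I S I (cs 0)))"

definition unitv :: "nat \<Rightarrow> conf" where
  "unitv A = (\<lambda>s. if s = A then 1 else 0)"

definition propensity :: "rxn set \<Rightarrow> real \<Rightarrow> conf \<Rightarrow> rxn \<Rightarrow> real" where
  "propensity R vol c \<alpha> =
     (let r = fst \<alpha>; k = real (card (Rr R r)) in
      if (\<exists>A. r = unitv A) then real (c (SOME A. r = unitv A)) / k
      else if (\<exists>A. r = (\<lambda>s. 2 * unitv A s)) then
        (1 / vol) * real (c (SOME A. r = (\<lambda>s. 2 * unitv A s)) choose 2) / k
      else if (\<exists>A B. A \<noteq> B \<and> r = (\<lambda>s. unitv A s + unitv B s)) then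
        (let AB = (SOME AB. fst AB \<noteq> snd AB \<and> r = (\<lambda>s. unitv (fst AB) s + unitv (snd AB) s))
         in (1 / vol) * real (c (fst AB)) * real (c (snd AB)) / k)
      else 0)"

definition prop_tot :: "rxn set \<Rightarrow> real \<Rightarrow> conf \<Rightarrow> real" where
  "prop_tot R vol c = (\<Sum>\<alpha>\<in>R. propensity R vol c \<alpha>)"

definition tau_hit :: "rxn set \<Rightarrow> rxn set \<Rightarrow> (nat \<Rightarrow> conf) \<Rightarrow> (nat \<Rightarrow> rxn) \<Rightarrow> nat \<Rightarrow> nat \<Rightarrow> bool" where
  "tau_hit R Q cs as t s \<longleftrightarrow> as (s - 1) \<in> Q \<or> (\<exists>u. t \<le> u \<and> u \<le> s \<and> (\<forall>\<beta>\<in>Q. \<beta> \<notin> app R (cs u)))"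

definition tau :: "rxn set \<Rightarrow> rxn set \<Rightarrow> (nat \<Rightarrow> conf) \<Rightarrow> (nat \<Rightarrow> rxn) \<Rightarrow> nat \<Rightarrow> enat" where
  "tau R Q cs as t = (if \<exists>s > t. tau_hit R Q cs as t s
      then enat (LEAST s. s > t \<and> tau_hit R Q cs as t s) else \<infinity>)"

text \<open>Stochastic execution from c: a finite prefix is a list of reactions; its configurations
and probability.\<close>
definition path_conf :: "conf \<Rightarrow> rxn list \<Rightarrow> nat \<Rightarrow> conf" where
  "path_conf c \<alpha>s i = foldl (\<lambda>d a. apply_rxn a d) c (take i \<alpha>s)"

definition path_prob :: "rxn set \<Rightarrow> real \<Rightarrow> conf \<Rightarrow> rxn list \<Rightarrow> real" where
  "path_prob R vol c \<alpha>s =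
     (\<Prod>i<length \<alpha>s. propensity R vol (path_conf c \<alpha>s i) (\<alpha>s ! i) / prop_tot R vol (path_conf c \<alpha>s i))"

text \<open>TC: expected total time span of the steps k with k < tau(eta_r, 0, Q), i.e. the sum over k
of the expected time span of step k on the event that tau has not occurred up to step k.\<close>
definition TC :: "rxn set \<Rightarrow> real \<Rightarrow> rxn set \<Rightarrow> conf \<Rightarrow> ennreal" where
  "TC R vol Q c = (\<Sum>k. \<Sum>\<alpha>s \<in> {\<alpha>s. set \<alpha>s \<subseteq> R \<and> length \<alpha>s = k}.
      (if (\<forall>s. 0 < s \<and> s \<le> k \<longrightarrow> \<not> tau_hit R Q (path_conf c \<alpha>s) (\<lambda>i. \<alpha>s ! i) 0 s)
       then ennreal (path_prob R vol c \<alpha>s * (1 / prop_tot R vol (path_conf c \<alpha>s k)))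
       else 0))"

primrec round_t :: "rxn set \<Rightarrow> (conf \<Rightarrow> rxn set) \<Rightarrow> (nat \<Rightarrow> nat) \<Rightarrow> (nat \<Rightarrow> conf) \<Rightarrow> (nat \<Rightarrow> rxn) \<Rightarrow> nat \<Rightarrow> enat" where
  "round_t R \<rho> \<sigma> cs as 0 = 0"
| "round_t R \<rho> \<sigma> cs as (Suc i) =
     (case round_t R \<rho> \<sigma> cs as i of
        enat t \<Rightarrow> tau R (\<rho> (cs (\<sigma> t))) cs as (\<sigma> t)
      | \<infinity> \<Rightarrow> \<infinity>)"

definition RT_exec :: "nat set \<Rightarrow> rxn set \<Rightarrow> iface \<Rightarrow> (nat \<Rightarrow> real) \<Rightarrow> (conf \<Rightarrow> rxn set) \<Rightarrow> (nat \<Rightarrow> nat)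
     \<Rightarrow> (nat \<Rightarrow> conf) \<Rightarrow> (nat \<Rightarrow> rxn) \<Rightarrow> ennreal" where
  "RT_exec S R I \<phi> \<rho> \<sigma> cs as =
     (let vol = \<phi> (norm1 S (cs 0));
          tstar = stab_step S R I cs;
          istar = (LEAST i. enat tstar \<le> round_t R \<rho> \<sigma> cs as i)
      in \<Sum>i<istar. (let e = cs (\<sigma> (the_enat (round_t R \<rho> \<sigma> cs as i))) in TC R vol (\<rho> e) e))"

definition runtime_policy :: "nat set \<Rightarrow> rxn set \<Rightarrow> (conf \<Rightarrow> rxn set) \<Rightarrow> bool" where
  "runtime_policy S R \<rho> \<longleftrightarrow> (\<forall>c. is_config S c \<longrightarrow> \<rho> c \<subseteq> NV R)"

definition skipping_policy :: "(nat \<Rightarrow> nat) \<Rightarrow> bool" where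
  "skipping_policy \<sigma> \<longleftrightarrow> (\<forall>t. t \<le> \<sigma> t)"

definition RT_stab :: "nat set \<Rightarrow> rxn set \<Rightarrow> iface \<Rightarrow> (nat \<Rightarrow> real) \<Rightarrow> ((conf \<Rightarrow> rxn set) \<Rightarrow> bool) \<Rightarrow> nat \<Rightarrow> ennreal" where
  "RT_stab S R I \<phi> P n =
     (INF \<rho> \<in> {\<rho>. runtime_policy S R \<rho> \<and> P \<rho>}.
        SUP x \<in> {(cs, as, \<sigma>). is_exec S R cs as \<and> weakly_fair R cs as \<and> valid_init S I (cs 0)
                  \<and> norm1 S (cs 0) = n \<and> skipping_policy \<sigma>}.
          (case x of (cs, as, \<sigma>) \<Rightarrow> RT_exec S R I \<phi> \<rho> \<sigma> cs as))"

definition volume_fun :: "(nat \<Rightarrow> real) \<Rightarrow> bool" where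
  "volume_fun \<phi> \<longleftrightarrow> (\<exists>a b. 0 < a \<and> (\<forall>n \<ge> 1. a * real n \<le> \<phi> n \<and> \<phi> n \<le> b * real n))"

end

theory Submission imports Defs begin


section \<open>Concrete protocol\<close>

definition SS :: "nat set" where "SS = {0,1,2,3,4}"
definition dbl :: "nat \<Rightarrow> conf" where "dbl a = (\<lambda>s. 2 * unitv a s)"

definition cyc1 :: rxn where "cyc1 = (unitv 2, unitv 3)"
definition cyc2 :: rxn where "cyc2 = (unitv 3, unitv 2)"
definition bet1 :: rxn where "bet1 = (unitv 2, unitv 4)"
definition bet2 :: rxn where "bet2 = (unitv 3, unitv 4)"
definition gam :: rxn where "gam = (dbl 1, dbl 4)"

definition NVs :: "rxn set" where "NVs = {cyc1, cyc2, bet1, bet2, gam}"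
definition RV :: "conf set" where "RV = {r. supp_in SS r \<and> 1 \<le> norm1 SS r \<and> norm1 SS r \<le> 2}"
definition Vd :: "conf set" where "Vd = RV - {unitv 2, unitv 3, dbl 1}"
definition RR :: "rxn set" where "RR = NVs \<union> (\<lambda>r. (r, r)) ` Vd"

lemma unitv_eq_iff[simp]: "unitv a = unitv b \<longleftrightarrow> a = b"
  by (auto simp: unitv_def fun_eq_iff split: if_splits)

lemma dbl_eq_iff[simp]: "dbl a = dbl b \<longleftrightarrow> a = b"
  by (auto simp: dbl_def unitv_def fun_eq_iff split: if_splits)

lemma unitv_neq_dbl[simp]: "unitv a \<noteq> dbl b" "dbl b \<noteq> unitv a"
  by (auto simp: dbl_def unitv_def fun_eq_iff split: if_splits)

lemma unitv_le_iff: "unitv a \<le> d \<longleftrightarrow> 1 \<le> d a"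
  by (auto simp: le_fun_def unitv_def)

lemma dbl_le_iff: "dbl a \<le> d \<longleftrightarrow> 2 \<le> d a"
  by (auto simp: le_fun_def unitv_def dbl_def)

lemma supp_unitv: "a \<in> SS \<Longrightarrow> supp_in SS (unitv a)"
  by (auto simp: supp_in_def unitv_def)

lemma supp_dbl: "a \<in> SS \<Longrightarrow> supp_in SS (dbl a)"
  by (auto simp: supp_in_def unitv_def dbl_def)

lemma norm1_unitv: "a \<in> SS \<Longrightarrow> norm1 SS (unitv a) = 1"
  by (auto simp: norm1_def SS_def unitv_def)

lemma norm1_dbl: "a \<in> SS \<Longrightarrow> norm1 SS (dbl a) = 2"
  by (auto simp: norm1_def SS_def unitv_def dbl_def)

lemma finite_SS[simp]: "finite SS" by (simp add: SS_def)

lemma le_norm1: "finite S \<Longrightarrow> s \<in> S \<Longrightarrow> c s \<le> norm1 S c"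
  unfolding norm1_def by (rule member_le_sum) auto

lemma finite_RV: "finite RV"
proof -
  let ?f = "\<lambda>r::conf. map r [0..<5]"
  have inj: "inj_on ?f RV"
  proof (rule inj_onI)
    fix r r' assume r: "r \<in> RV" and r': "r' \<in> RV" and eq: "?f r = ?f r'"
    show "r = r'"
    proof
      fix s
      show "r s = r' s"
      proof (cases "s < 5")
        case True
        then show ?thesis using eq by auto
      next
        case False
        then have "s \<notin> SS" by (auto simp: SS_def)
        then show ?thesis using r r' by (auto simp: RV_def supp_in_def)
      qed
    qed
  qed
  have "?f ` RV \<subseteq> {xs. set xs \<subseteq> {0..2} \<and> length xs = 5}"
  proof
    fix xs assume "xs \<in> ?f ` RV"
    then obtain r where r: "r \<in> RV" and xs: "xs = ?f r" by auto
    have "\<forall>s. r s \<le> 2"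
    proof
      fix s show "r s \<le> 2"
      proof (cases "s \<in> SS")
        case True then show ?thesis using r le_norm1[of SS s r] by (auto simp: RV_def)
      next
        case False then show ?thesis using r by (auto simp: RV_def supp_in_def)
      qed
    qed
    then show "xs \<in> {xs. set xs \<subseteq> {0..2} \<and> length xs = 5}" using xs by auto
  qed
  moreover have "finite {xs. set xs \<subseteq> {0..2::nat} \<and> length xs = 5}"
    by (rule finite_lists_length_eq) simp
  ultimately have "finite (?f ` RV)" by (rule finite_subset)
  then show ?thesis using inj finite_imageD by blast
qed

lemma finite_RR: "finite RR"
  using finite_RV by (simp add: RR_def NVs_def Vd_def)

lemma RR_cases: "\<alpha> \<in> RR \<Longrightarrow> (\<alpha> = cyc1 \<or> \<alpha> = cyc2 \<or> \<alpha> = bet1 \<or> \<alpha> = bet2 \<or> \<alpha> = gam) \<or> (\<exists>r. \<alpha> = (r, r) \<and> r \<in> Vd)"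
  by (auto simp: RR_def NVs_def)

lemma NVs_in[simp]: "cyc1 \<in> RR" "cyc2 \<in> RR" "bet1 \<in> RR" "bet2 \<in> RR" "gam \<in> RR"
  by (auto simp: RR_def NVs_def)

lemma rxn_shape:
  assumes "\<alpha> \<in> RR"
  shows "supp_in SS (fst \<alpha>) \<and> supp_in SS (snd \<alpha>) \<and> norm1 SS (fst \<alpha>) = norm1 SS (snd \<alpha>)
    \<and> norm1 SS (fst \<alpha>) \<in> {1,2} \<and> fst \<alpha> 4 \<le> snd \<alpha> 4"
proof -
  have S: "0 \<in> SS" "1 \<in> SS" "2 \<in> SS" "3 \<in> SS" "4 \<in> SS" "Suc 0 \<in> SS" by (auto simp: SS_def)
  have u4: "\<And>a. a \<noteq> 4 \<Longrightarrow> unitv a 4 = 0" "dbl 1 4 = 0" "dbl (Suc 0) 4 = 0" by (auto simp: unitv_def dbl_def)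
  show ?thesis
  using RR_cases[OF assms]
  by (auto simp: cyc1_def cyc2_def bet1_def bet2_def gam_def supp_unitv supp_dbl norm1_unitv norm1_dbl
      Vd_def RV_def S u4)
qed

lemma apply_supp_norm:
  assumes c: "supp_in SS c" and a: "\<alpha> \<in> RR" and le: "fst \<alpha> \<le> c"
  shows "supp_in SS (apply_rxn \<alpha> c) \<and> norm1 SS (apply_rxn \<alpha> c) = norm1 SS c"
proof -
  obtain r p where rp: "\<alpha> = (r, p)" by (cases \<alpha>)
  have sh: "supp_in SS r" "supp_in SS p" "norm1 SS r = norm1 SS p"
    using rxn_shape[OF a] rp by auto
  have rle: "\<And>s. r s \<le> c s" using le rp by (auto simp: le_fun_def)
  have "supp_in SS (apply_rxn \<alpha> c)"
    using c sh rp by (auto simp: supp_in_def apply_rxn_def)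
  moreover have "norm1 SS (apply_rxn \<alpha> c) = norm1 SS c"
  proof -
    have "norm1 SS (apply_rxn \<alpha> c) = (\<Sum>s\<in>SS. (c s - r s) + p s)"
      by (simp add: norm1_def apply_rxn_def rp)
    also have "\<dots> = (\<Sum>s\<in>SS. c s - r s) + norm1 SS p"
      by (simp add: sum.distrib norm1_def)
    also have "(\<Sum>s\<in>SS. c s - r s) = norm1 SS c - norm1 SS r"
      unfolding norm1_def by (rule sum_subtractf_nat) (use rle in auto)
    also have "norm1 SS r \<le> norm1 SS c"
      unfolding norm1_def by (rule sum_mono) (use rle in auto)
    ultimately show ?thesis using sh by simp
  qed
  ultimately show ?thesis by blast
qed

lemma step_config:
  assumes "is_config SS c" "step RR c c'"
  shows "is_config SS c' \<and> norm1 SS c' = norm1 SS c"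
  using assms apply_supp_norm unfolding step_def app_def is_config_def by fastforce

lemma reach_config:
  assumes "reach RR c c'" "is_config SS c"
  shows "is_config SS c' \<and> norm1 SS c' = norm1 SS c"
  using assms(1) unfolding reach_def
  by (induction rule: rtranclp_induct) (use assms(2) step_config in auto)

lemma apply_Z_mono:
  assumes "\<alpha> \<in> RR" "fst \<alpha> \<le> c"
  shows "c 4 \<le> apply_rxn \<alpha> c 4"
  using rxn_shape[OF assms(1)] assms(2) by (auto simp: apply_rxn_def le_fun_def)

lemma reach_Z_mono:
  assumes "reach RR c c'"
  shows "c 4 \<le> c' 4"
  using assms unfolding reach_def
  by (induction rule: rtranclp_induct) (use apply_Z_mono in \<open>force simp: step_def app_def\<close>)+

lemma crn_RR: "crn SS RR"
  unfolding crn_def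
proof (intro conjI)
  show "finite SS" by simp
  show "finite RR" by (rule finite_RR)
  show "\<forall>(r, p)\<in>RR. supp_in SS r \<and> supp_in SS p \<and> norm1 SS r \<in> {1, 2} \<and> norm1 SS r \<le> norm1 SS p"
    using rxn_shape by fastforce
  show "\<forall>r. supp_in SS r \<and> 1 \<le> norm1 SS r \<and> norm1 SS r \<le> 2 \<longrightarrow> Rr RR r \<noteq> {}"
  proof (intro allI impI)
    fix r assume r: "supp_in SS r \<and> 1 \<le> norm1 SS r \<and> norm1 SS r \<le> 2"
    show "Rr RR r \<noteq> {}"
    proof (cases "r \<in> {unitv 2, unitv 3, dbl 1}")
      case True
      have f: "fst cyc1 = unitv 2" "fst cyc2 = unitv 3" "fst gam = dbl 1"
        by (simp_all add: cyc1_def cyc2_def gam_def)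
      have "cyc1 \<in> Rr RR r \<or> cyc2 \<in> Rr RR r \<or> gam \<in> Rr RR r"
        using True NVs_in unfolding Rr_def f by (auto simp only: f mem_Collect_eq insert_iff) 
      then show ?thesis by auto
    next
      case False
      then have "r \<in> Vd" using r by (auto simp: Vd_def RV_def)
      then have "(r, r) \<in> Rr RR r" by (auto simp: Rr_def RR_def)
      then show ?thesis by auto
    qed
  qed
  show "\<forall>r. (r, r) \<in> RR \<longrightarrow> Rr RR r = {(r, r)}"
  proof (intro allI impI)
    fix r assume "(r, r) \<in> RR"
    then have rV: "r \<in> Vd"
      by (auto simp: RR_def NVs_def cyc1_def cyc2_def bet1_def bet2_def gam_def)
    show "Rr RR r = {(r, r)}"
      using rV by (auto simp: Rr_def RR_def NVs_def cyc1_def cyc2_def bet1_def bet2_def gam_def Vd_def)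
  qed
  show "finite_density SS RR"
    unfolding finite_density_def by (rule exI[of _ 1]) (use reach_config in auto)
qed


definition e1 :: "nat \<Rightarrow> conf" where "e1 m = (\<lambda>s. if s = 0 then m else if s = 1 then 2 else if s = 2 then 1 else 0)"
definition e2 :: "nat \<Rightarrow> conf" where "e2 m = (\<lambda>s. if s = 0 then m else if s = 1 then 2 else if s = 3 then 1 else 0)"
definition fm :: "nat \<Rightarrow> conf" where "fm m = (\<lambda>s. if s = 0 then m else if s = 1 then 2 else if s = 4 then 1 else 0)"
definition gm :: "nat \<Rightarrow> conf" where "gm m = (\<lambda>s. if s = 0 then m else if s = 4 then 3 else 0)"

definition Crel :: "(conf \<times> conf) set" where "Crel = {(c0, c). c0 \<in> range e1 \<and> 1 \<le> c 4}"
definition II :: iface where "II = (UNIV, id, Crel)"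

lemma distinct_rxns[simp]:
  "cyc1 \<noteq> cyc2" "cyc1 \<noteq> bet1" "cyc1 \<noteq> bet2" "cyc1 \<noteq> gam"
  "cyc2 \<noteq> cyc1" "cyc2 \<noteq> bet1" "cyc2 \<noteq> bet2" "cyc2 \<noteq> gam"
  "bet1 \<noteq> cyc1" "bet1 \<noteq> cyc2" "bet1 \<noteq> bet2" "bet1 \<noteq> gam"
  "bet2 \<noteq> cyc1" "bet2 \<noteq> cyc2" "bet2 \<noteq> bet1" "bet2 \<noteq> gam"
  "gam \<noteq> cyc1" "gam \<noteq> cyc2" "gam \<noteq> bet1" "gam \<noteq> bet2"
  by (auto simp: cyc1_def cyc2_def bet1_def bet2_def gam_def)

lemma nonvoid_rxns[simp]:
  "cyc1 \<noteq> (r, r)" "cyc2 \<noteq> (r, r)" "bet1 \<noteq> (r, r)" "bet2 \<noteq> (r, r)" "gam \<noteq> (r, r)"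
  by (auto simp: cyc1_def cyc2_def bet1_def bet2_def gam_def)

lemma apply_void: "r \<le> d \<Longrightarrow> apply_rxn (r, r) d = d"
  by (auto simp: apply_rxn_def le_fun_def fun_eq_iff)

lemma fst_rxns: "fst cyc1 = unitv 2" "fst cyc2 = unitv 3" "fst bet1 = unitv 2" "fst bet2 = unitv 3" "fst gam = dbl 1"
  by (simp_all add: cyc1_def cyc2_def bet1_def bet2_def gam_def)

lemma conf_vals[simp]:
  "e1 m 0 = m" "e1 m 1 = 2" "e1 m 2 = 1" "e1 m 3 = 0" "e1 m 4 = 0"
  "e2 m 0 = m" "e2 m 1 = 2" "e2 m 2 = 0" "e2 m 3 = 1" "e2 m 4 = 0"
  "fm m 0 = m" "fm m 1 = 2" "fm m 2 = 0" "fm m 3 = 0" "fm m 4 = 1"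
  "gm m 0 = m" "gm m 1 = 0" "gm m 2 = 0" "gm m 3 = 0" "gm m 4 = 3"
  "e1 m (Suc 0) = 2" "e2 m (Suc 0) = 2" "fm m (Suc 0) = 2" "gm m (Suc 0) = 0"
  by (simp_all add: e1_def e2_def fm_def gm_def)

lemma conf_neq[simp]: "e1 m \<noteq> e2 m'" "e2 m' \<noteq> e1 m" "e1 m \<noteq> fm m'" "e2 m \<noteq> fm m'"
  "fm m' \<noteq> e1 m" "fm m' \<noteq> e2 m"
  by (auto simp: fun_eq_iff e1_def e2_def fm_def dest: spec[of _ 2] spec[of _ 3])

lemma app_rxns:
  "fst cyc1 \<le> d \<longleftrightarrow> 1 \<le> d 2" "fst cyc2 \<le> d \<longleftrightarrow> 1 \<le> d 3"
  "fst bet1 \<le> d \<longleftrightarrow> 1 \<le> d 2" "fst bet2 \<le> d \<longleftrightarrow> 1 \<le> d 3" "fst gam \<le> d \<longleftrightarrow> 2 \<le> d 1"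
  by (simp_all add: fst_rxns unitv_le_iff dbl_le_iff)

lemma apply_rxns:
  "apply_rxn cyc1 (e1 m) = e2 m" "apply_rxn cyc2 (e2 m) = e1 m"
  "apply_rxn bet1 (e1 m) = fm m" "apply_rxn bet2 (e2 m) = fm m"
  by (auto simp: apply_rxn_def cyc1_def cyc2_def bet1_def bet2_def e1_def e2_def fm_def unitv_def fun_eq_iff)

lemma apply_Q0_Z:
  assumes "\<alpha> \<in> {bet1, bet2, gam}" "fst \<alpha> \<le> d"
  shows "1 \<le> apply_rxn \<alpha> d 4"
  using assms by (auto simp: apply_rxn_def bet1_def bet2_def gam_def unitv_def dbl_def)

lemma stepT:
  assumes a: "\<alpha> \<in> RR" and d: "d \<in> {e1 m, e2 m}" and le: "fst \<alpha> \<le> d" and nq: "\<alpha> \<notin> {bet1, bet2, gam}"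
  shows "apply_rxn \<alpha> d \<in> {e1 m, e2 m}"
  using RR_cases[OF a]
proof
  assume "\<alpha> = cyc1 \<or> \<alpha> = cyc2 \<or> \<alpha> = bet1 \<or> \<alpha> = bet2 \<or> \<alpha> = gam"
  then show ?thesis using d le nq by (auto simp: app_rxns apply_rxns)
next
  assume "\<exists>r. \<alpha> = (r, r) \<and> r \<in> Vd"
  then show ?thesis using d le by (auto simp: apply_void)
qed

lemma stepW:
  assumes a: "\<alpha> \<in> RR" and d: "d \<in> {e1 m, e2 m, fm m}" and le: "fst \<alpha> \<le> d" and nq: "\<alpha> \<noteq> gam"
  shows "apply_rxn \<alpha> d \<in> {e1 m, e2 m, fm m}"
  using RR_cases[OF a]
proof
  assume "\<alpha> = cyc1 \<or> \<alpha> = cyc2 \<or> \<alpha> = bet1 \<or> \<alpha> = bet2 \<or> \<alpha> = gam"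
  then show ?thesis using d le nq by (auto simp: app_rxns apply_rxns)
next
  assume "\<exists>r. \<alpha> = (r, r) \<and> r \<in> Vd"
  then show ?thesis using d le by (auto simp: apply_void)
qed

lemma stepG:
  assumes a: "\<alpha> \<in> RR" and le: "fst \<alpha> \<le> gm m"
  shows "apply_rxn \<alpha> (gm m) = gm m"
  using RR_cases[OF a]
proof
  assume "\<alpha> = cyc1 \<or> \<alpha> = cyc2 \<or> \<alpha> = bet1 \<or> \<alpha> = bet2 \<or> \<alpha> = gam"
  then show ?thesis using le by (auto simp: app_rxns)
next
  assume "\<exists>r. \<alpha> = (r, r) \<and> r \<in> Vd"
  then show ?thesis using le by (auto simp: apply_void)
qed

lemma apply_gam_fm: "apply_rxn gam (fm m) = gm m"
  by (auto simp: apply_rxn_def gam_def dbl_def fm_def gm_def unitv_def fun_eq_iff)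

lemma config_confs: "is_config SS (e1 m)" "is_config SS (e2 m)" "is_config SS (fm m)" "is_config SS (gm m)"
  by (auto simp: is_config_def supp_in_def norm1_def SS_def e1_def e2_def fm_def gm_def)

lemma norm1_e1: "norm1 SS (e1 m) = m + 3"
  by (simp add: norm1_def SS_def e1_def)

lemma Z_I_eq: "Z_I SS II c0 = {c. is_config SS c \<and> c0 \<in> range e1 \<and> 1 \<le> c 4}"
  by (auto simp: Z_I_def II_def Crel_def)

lemma valid_init_iff: "valid_init SS II c0 \<longleftrightarrow> c0 \<in> range e1"
proof -
  have "4 \<in> SS" by (simp add: SS_def)
  then have "is_config SS (unitv 4)" by (auto simp: is_config_def supp_unitv norm1_unitv)
  moreover have "unitv 4 4 = 1" by (simp add: unitv_def)
  ultimately show ?thesis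
    by (auto simp: valid_init_def Z_I_eq config_confs)
qed

lemma stab_iff:
  assumes "c0 \<in> range e1" "is_config SS c"
  shows "c \<in> stab RR (Z_I SS II c0) \<longleftrightarrow> 1 \<le> c 4"
proof
  assume "c \<in> stab RR (Z_I SS II c0)"
  then show "1 \<le> c 4" by (auto simp: stab_def Z_I_eq)
next
  assume c4: "1 \<le> c 4"
  have "\<And>c'. reach RR c c' \<Longrightarrow> c' \<in> Z_I SS II c0"
    using reach_config[OF _ assms(2)] reach_Z_mono c4 assms(1) by (fastforce simp: Z_I_eq)
  moreover have "c \<in> Z_I SS II c0" using assms c4 by (simp add: Z_I_eq)
  ultimately show "c \<in> stab RR (Z_I SS II c0)" by (auto simp: stab_def)
qed

lemma interface_II: "interface SS II"
  by (simp add: interface_def II_def)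


lemma gam_app_T: "d \<in> {e1 m, e2 m, fm m} \<Longrightarrow> gam \<in> app RR d"
  by (auto simp: app_def app_rxns)

lemma exec_inv:
  assumes ex: "is_exec SS RR cs as" and c0: "cs 0 = e1 m"
  shows "cs t \<in> {e1 m, e2 m} \<or> 1 \<le> cs t 4"
proof (induction t)
  case 0 then show ?case using c0 by simp
next
  case (Suc t)
  have a: "as t \<in> RR" "fst (as t) \<le> cs t" and cs: "cs (Suc t) = apply_rxn (as t) (cs t)"
    using ex by (auto simp: is_exec_def app_def)
  show ?case
  proof (cases "1 \<le> cs t 4")
    case True then show ?thesis using apply_Z_mono[OF a] cs by auto
  next
    case False
    then have T: "cs t \<in> {e1 m, e2 m}" using Suc by auto
    show ?thesis
    proof (cases "as t \<in> {bet1, bet2, gam}")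
      case True then show ?thesis using apply_Q0_Z[OF True a(2)] cs by auto
    next
      case False then show ?thesis using stepT[OF a(1) T a(2) False] cs by auto
    qed
  qed
qed

lemma stably_correct_RR: "stably_correct SS RR II"
  unfolding stably_correct_def
proof (intro allI impI)
  fix cs as assume H: "is_exec SS RR cs as \<and> weakly_fair RR cs as \<and> valid_init SS II (cs 0)"
  then have ex: "is_exec SS RR cs as" and fair: "weakly_fair RR cs as" and v: "cs 0 \<in> range e1"
    by (auto simp: valid_init_iff)
  then obtain m where c0: "cs 0 = e1 m" by auto
  have cfg: "\<And>t. is_config SS (cs t)" using ex by (simp add: is_exec_def)
  show "\<exists>t. cs t \<in> stab RR (Z_I SS II (cs 0))"
  proof (rule ccontr)
    assume "\<not> ?thesis"
    then have Z0: "\<And>t. \<not> 1 \<le> cs t 4" using stab_iff[OF v cfg] by auto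
    then have T: "\<And>t. cs t \<in> {e1 m, e2 m}" using exec_inv[OF ex c0] by blast
    have "gam \<in> app RR (cs 0)" using gam_app_T[of "cs 0" m] T[of 0] by auto
    then obtain s where s: "as s = gam \<or> gam \<notin> app RR (cs s)"
      using fair unfolding weakly_fair_def by blast
    show False
    proof (cases "as s = gam")
      case True
      have "fst (as s) \<le> cs s" "cs (Suc s) = apply_rxn (as s) (cs s)"
        using ex by (auto simp: is_exec_def app_def)
      then have "1 \<le> cs (Suc s) 4" using apply_Q0_Z[of gam "cs s"] True by auto
      then show False using Z0 by blast
    next
      case False
      then show False using s gam_app_T[of "cs s" m] T[of s] by auto
    qed
  qed
qed



definition Lk :: "rxn set \<Rightarrow> nat \<Rightarrow> rxn list set" where
  "Lk R k = {xs. set xs \<subseteq> R \<and> length xs = k}"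

definition Ec :: "conf \<Rightarrow> rxn list \<Rightarrow> conf" where
  "Ec c xs = path_conf c xs (length xs)"

definition surv :: "rxn set \<Rightarrow> rxn set \<Rightarrow> conf \<Rightarrow> rxn list \<Rightarrow> bool" where
  "surv R Q c xs \<longleftrightarrow> (\<forall>s. 0 < s \<and> s \<le> length xs \<longrightarrow> \<not> tau_hit R Q (path_conf c xs) (\<lambda>i. xs ! i) 0 s)"

definition Qapp :: "rxn set \<Rightarrow> rxn set \<Rightarrow> conf \<Rightarrow> bool" where
  "Qapp R Q d \<longleftrightarrow> (\<exists>\<beta>\<in>Q. \<beta> \<in> app R d)"

lemma prop_nonneg: "0 \<le> vol \<Longrightarrow> 0 \<le> propensity R vol d \<alpha>"
  unfolding propensity_def Let_def by (auto intro!: divide_nonneg_nonneg mult_nonneg_nonneg)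

lemma pt_nonneg: "0 \<le> vol \<Longrightarrow> 0 \<le> prop_tot R vol d"
  unfolding prop_tot_def by (auto intro!: sum_nonneg prop_nonneg)

lemma path_prob_nonneg: "0 \<le> vol \<Longrightarrow> 0 \<le> path_prob R vol c xs"
  unfolding path_prob_def by (auto intro!: prod_nonneg divide_nonneg_nonneg prop_nonneg pt_nonneg)

lemma prop_app:
  assumes "propensity R vol d \<alpha> \<noteq> 0"
  shows "fst \<alpha> \<le> d"
proof -
  let ?r = "fst \<alpha>"
  show ?thesis
  proof (cases "\<exists>A. ?r = unitv A")
    case True
    define A where "A = (SOME A. ?r = unitv A)"
    have rA: "?r = unitv A" unfolding A_def using someI_ex[OF True] .
    have "d A \<noteq> 0" using assms True unfolding propensity_def Let_def A_def by auto
    then show ?thesis using rA by (auto simp: le_fun_def unitv_def)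
  next
    case F1: False
    show ?thesis
    proof (cases "\<exists>A. ?r = (\<lambda>s. 2 * unitv A s)")
      case True
      define A where "A = (SOME A. ?r = (\<lambda>s. 2 * unitv A s))"
      have rA: "?r = (\<lambda>s. 2 * unitv A s)" unfolding A_def using someI_ex[OF True] .
      have "d A choose 2 \<noteq> 0" using assms True F1 unfolding propensity_def Let_def A_def by auto
      then have "2 \<le> d A" by (metis zero_less_binomial_iff not_less not_gr0)
      then show ?thesis using rA by (auto simp: le_fun_def unitv_def)
    next
      case F2: False
      show ?thesis
      proof (cases "\<exists>A B. A \<noteq> B \<and> ?r = (\<lambda>s. unitv A s + unitv B s)")
        case True
        then have ex: "\<exists>AB. fst AB \<noteq> snd AB \<and> ?r = (\<lambda>s. unitv (fst AB) s + unitv (snd AB) s)" by auto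
        define AB where "AB = (SOME AB. fst AB \<noteq> snd AB \<and> ?r = (\<lambda>s. unitv (fst AB) s + unitv (snd AB) s))"
        have rA: "fst AB \<noteq> snd AB \<and> ?r = (\<lambda>s. unitv (fst AB) s + unitv (snd AB) s)"
          unfolding AB_def using someI_ex[OF ex] .
        have "d (fst AB) \<noteq> 0 \<and> d (snd AB) \<noteq> 0" using assms True F1 F2 unfolding propensity_def Let_def AB_def by auto
        moreover obtain A B where "AB = (A, B)" by (cases AB)
        ultimately show ?thesis using rA by (auto simp: le_fun_def unitv_def)
      next
        case False
        then have "propensity R vol d \<alpha> = 0" using F1 F2 unfolding propensity_def Let_def by auto
        then show ?thesis using assms by simp
      qed
    qed
  qed
qed

lemma finite_Lk: "finite R \<Longrightarrow> finite (Lk R k)"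
  unfolding Lk_def by (rule finite_lists_length_eq)

lemma Lk_0: "Lk R 0 = {[]}" by (auto simp: Lk_def)

lemma Lk_Suc: "Lk R (Suc k) = (\<lambda>(xs, a). xs @ [a]) ` (Lk R k \<times> R)"
proof
  show "Lk R (Suc k) \<subseteq> (\<lambda>(xs, a). xs @ [a]) ` (Lk R k \<times> R)"
  proof
    fix ys assume "ys \<in> Lk R (Suc k)"
    then have ys: "set ys \<subseteq> R" "length ys = Suc k" by (auto simp: Lk_def)
    then obtain xs a where "ys = xs @ [a]" by (metis length_Suc_conv_rev)
    then show "ys \<in> (\<lambda>(xs, a). xs @ [a]) ` (Lk R k \<times> R)" using ys
      by (auto simp: Lk_def image_iff)
  qed
qed (auto simp: Lk_def)

lemma sum_Lk_Suc:
  "(\<Sum>ys\<in>Lk R (Suc k). f ys) = (\<Sum>xs\<in>Lk R k. \<Sum>a\<in>R. f (xs @ [a]))"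
proof -
  have inj: "inj_on (\<lambda>(xs, a). xs @ [a]) (Lk R k \<times> R)" by (auto simp: inj_on_def)
  have "(\<Sum>ys\<in>Lk R (Suc k). f ys) = (\<Sum>p\<in>Lk R k \<times> R. f ((\<lambda>(xs, a). xs @ [a]) p))"
    unfolding Lk_Suc by (rule sum.reindex[OF inj, unfolded comp_def])
  also have "\<dots> = (\<Sum>xs\<in>Lk R k. \<Sum>a\<in>R. f (xs @ [a]))"
    by (simp add: sum.cartesian_product case_prod_unfold)
  finally show ?thesis .
qed

lemma path_conf_snoc: "i \<le> length xs \<Longrightarrow> path_conf c (xs @ [a]) i = path_conf c xs i"
  by (simp add: path_conf_def)

lemma Ec_snoc: "Ec c (xs @ [a]) = apply_rxn a (Ec c xs)"
  by (simp add: Ec_def path_conf_def)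

lemma path_conf_Suc_len: "path_conf c (xs @ [a]) (Suc (length xs)) = apply_rxn a (Ec c xs)"
  by (simp add: Ec_def path_conf_def)

lemma path_prob_snoc:
  "path_prob R vol c (xs @ [a]) = path_prob R vol c xs * (propensity R vol (Ec c xs) a / prop_tot R vol (Ec c xs))"
proof -
  have "path_prob R vol c (xs @ [a]) =
    (\<Prod>i<length xs. propensity R vol (path_conf c (xs @ [a]) i) ((xs @ [a]) ! i) / prop_tot R vol (path_conf c (xs @ [a]) i))
    * (propensity R vol (path_conf c (xs @ [a]) (length xs)) ((xs @ [a]) ! length xs) / prop_tot R vol (path_conf c (xs @ [a]) (length xs)))"
    by (simp add: path_prob_def)
  also have "(\<Prod>i<length xs. propensity R vol (path_conf c (xs @ [a]) i) ((xs @ [a]) ! i) / prop_tot R vol (path_conf c (xs @ [a]) i))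
     = path_prob R vol c xs"
    unfolding path_prob_def by (rule prod.cong) (auto simp: path_conf_snoc nth_append)
  finally show ?thesis by (simp add: path_conf_snoc Ec_def)
qed

lemma path_prob_Nil: "path_prob R vol c [] = 1" by (simp add: path_prob_def)
lemma Ec_Nil: "Ec c [] = c" by (simp add: Ec_def path_conf_def)

lemma surv_iff:
  assumes "Qapp R Q c"
  shows "surv R Q c xs \<longleftrightarrow> (\<forall>i<length xs. xs ! i \<notin> Q) \<and> (\<forall>u\<le>length xs. Qapp R Q (path_conf c xs u))"
proof
  assume H: "surv R Q c xs"
  have nh: "\<And>s. 0 < s \<Longrightarrow> s \<le> length xs \<Longrightarrow> xs ! (s - 1) \<notin> Q \<and> (\<forall>u\<le>s. Qapp R Q (path_conf c xs u))"
    using H unfolding surv_def tau_hit_def Qapp_def by auto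
  show "(\<forall>i<length xs. xs ! i \<notin> Q) \<and> (\<forall>u\<le>length xs. Qapp R Q (path_conf c xs u))"
  proof (intro conjI allI impI)
    fix i assume "i < length xs" then show "xs ! i \<notin> Q" using nh[of "Suc i"] by auto
  next
    fix u assume u: "u \<le> length xs"
    show "Qapp R Q (path_conf c xs u)"
    proof (cases "u = 0")
      case True then show ?thesis using assms by (simp add: path_conf_def)
    next
      case False
      then have "0 < length xs" using u by auto
      then show ?thesis using nh[of "length xs"] u by auto
    qed
  qed
next
  assume "(\<forall>i<length xs. xs ! i \<notin> Q) \<and> (\<forall>u\<le>length xs. Qapp R Q (path_conf c xs u))"
  then show "surv R Q c xs" unfolding surv_def tau_hit_def Qapp_def
    by (metis Suc_diff_1 Suc_le_lessD order.trans)
qed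

lemma surv_snoc:
  assumes "Qapp R Q c"
  shows "surv R Q c (xs @ [a]) \<longleftrightarrow> surv R Q c xs \<and> a \<notin> Q \<and> Qapp R Q (apply_rxn a (Ec c xs))"
proof -
  have A: "(\<forall>i<length (xs @ [a]). (xs @ [a]) ! i \<notin> Q) \<longleftrightarrow> (\<forall>i<length xs. xs ! i \<notin> Q) \<and> a \<notin> Q"
    by (auto simp: nth_append less_Suc_eq)
  have B: "(\<forall>u\<le>length (xs @ [a]). Qapp R Q (path_conf c (xs @ [a]) u)) \<longleftrightarrow>
     (\<forall>u\<le>length xs. Qapp R Q (path_conf c xs u)) \<and> Qapp R Q (apply_rxn a (Ec c xs))"
    by (auto simp: path_conf_snoc path_conf_Suc_len le_Suc_eq)
  show ?thesis using A B surv_iff[OF assms] by auto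
qed

lemma surv_Nil: "surv R Q c []" by (simp add: surv_def)


definition pQ :: "rxn set \<Rightarrow> real \<Rightarrow> rxn set \<Rightarrow> conf \<Rightarrow> real" where
  "pQ R vol Q d = (\<Sum>\<alpha>\<in>Q. propensity R vol d \<alpha>)"

definition SSk :: "rxn set \<Rightarrow> real \<Rightarrow> rxn set \<Rightarrow> conf \<Rightarrow> nat \<Rightarrow> real" where
  "SSk R vol Q c k = (\<Sum>xs\<in>Lk R k. if surv R Q c xs then path_prob R vol c xs else 0)"

definition UU :: "rxn set \<Rightarrow> real \<Rightarrow> rxn set \<Rightarrow> conf \<Rightarrow> nat \<Rightarrow> real" where
  "UU R vol Q c k = (\<Sum>xs\<in>Lk R k. if surv R Q c xs then path_prob R vol c xs * (1 / prop_tot R vol (Ec c xs)) else 0)"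

definition DD :: "rxn set \<Rightarrow> real \<Rightarrow> rxn set \<Rightarrow> conf \<Rightarrow> nat \<Rightarrow> real" where
  "DD R vol Q c k = (\<Sum>xs\<in>Lk R k. if surv R Q c xs then path_prob R vol c xs * (pQ R vol Q (Ec c xs) / prop_tot R vol (Ec c xs)) else 0)"

lemma TC_eq:
  assumes "0 \<le> vol"
  shows "TC R vol Q c = (\<Sum>k. ennreal (UU R vol Q c k))"
  unfolding TC_def UU_def
proof (rule suminf_cong)
  fix k
  have "(\<Sum>\<alpha>s\<in>{\<alpha>s. set \<alpha>s \<subseteq> R \<and> length \<alpha>s = k}.
        if \<forall>s. 0 < s \<and> s \<le> k \<longrightarrow> \<not> tau_hit R Q (path_conf c \<alpha>s) ((!) \<alpha>s) 0 s
        then ennreal (path_prob R vol c \<alpha>s * (1 / prop_tot R vol (path_conf c \<alpha>s k))) else 0)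
     = (\<Sum>xs\<in>Lk R k. ennreal (if surv R Q c xs then path_prob R vol c xs * (1 / prop_tot R vol (Ec c xs)) else 0))"
    unfolding Lk_def by (rule sum.cong) (auto simp: surv_def Ec_def)
  also have "\<dots> = ennreal (\<Sum>xs\<in>Lk R k. if surv R Q c xs then path_prob R vol c xs * (1 / prop_tot R vol (Ec c xs)) else 0)"
    using assms by (intro sum_ennreal) (auto intro!: mult_nonneg_nonneg divide_nonneg_nonneg path_prob_nonneg pt_nonneg)
  finally show "(\<Sum>\<alpha>s\<in>{\<alpha>s. set \<alpha>s \<subseteq> R \<and> length \<alpha>s = k}.
        if \<forall>s. 0 < s \<and> s \<le> k \<longrightarrow> \<not> tau_hit R Q (path_conf c \<alpha>s) ((!) \<alpha>s) 0 s
        then ennreal (path_prob R vol c \<alpha>s * (1 / prop_tot R vol (path_conf c \<alpha>s k))) else 0)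
     = ennreal (\<Sum>xs\<in>Lk R k. if surv R Q c xs then path_prob R vol c xs * (1 / prop_tot R vol (Ec c xs)) else 0)" .
qed

lemma TC_empty:
  assumes "0 \<le> vol"
  shows "TC R vol {} c = ennreal (1 / prop_tot R vol c)"
proof -
  have nsurv: "\<not> surv R {} c xs" if "xs \<noteq> []" for xs
    using that unfolding surv_def tau_hit_def by (auto intro!: exI[of _ 1] simp: Suc_le_eq)
  have U0: "UU R vol {} c 0 = 1 / prop_tot R vol c"
    by (simp add: UU_def Lk_0 surv_Nil path_prob_Nil Ec_Nil)
  have Uk: "UU R vol {} c k = 0" if "k \<noteq> 0" for k
    unfolding UU_def by (rule sum.neutral) (use that nsurv in \<open>auto simp: Lk_def\<close>)
  have "(\<Sum>k. ennreal (UU R vol {} c k)) = (\<Sum>k\<in>{0}. ennreal (UU R vol {} c k))"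
    by (rule suminf_finite) (auto simp: Uk)
  then show ?thesis using TC_eq[OF assms] U0 by simp
qed

locale tcw =
  fixes R :: "rxn set" and vol :: real and Q :: "rxn set" and c :: conf and W :: "conf set"
  assumes finR: "finite R" and QR: "Q \<subseteq> R" and vol: "0 < vol" and cW: "c \<in> W"
    and W1: "\<And>d. d \<in> W \<Longrightarrow> 0 < prop_tot R vol d"
    and W2: "\<And>d \<alpha>. d \<in> W \<Longrightarrow> \<alpha> \<in> R \<Longrightarrow> \<alpha> \<notin> Q \<Longrightarrow> fst \<alpha> \<le> d \<Longrightarrow> apply_rxn \<alpha> d \<in> W"
    and W3: "\<And>d. d \<in> W \<Longrightarrow> Qapp R Q d"
begin

lemma Qc: "Qapp R Q c" using W3[OF cW] .

lemma inv: "set xs \<subseteq> R \<Longrightarrow> surv R Q c xs \<Longrightarrow> path_prob R vol c xs \<noteq> 0 \<Longrightarrow> Ec c xs \<in> W"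
proof (induction xs rule: rev_induct)
  case Nil then show ?case using cW by (simp add: Ec_Nil)
next
  case (snoc a xs)
  have s: "surv R Q c xs" "a \<notin> Q" using snoc.prems(2) surv_snoc[OF Qc] by auto
  have p: "path_prob R vol c xs \<noteq> 0" "propensity R vol (Ec c xs) a \<noteq> 0"
    using snoc.prems(3) by (auto simp: path_prob_snoc)
  have "Ec c xs \<in> W" using snoc.IH snoc.prems(1) s p by auto
  then show ?case using W2[of "Ec c xs" a] prop_app[OF p(2)] snoc.prems(1) s by (auto simp: Ec_snoc)
qed

lemma step_id:
  assumes xs: "set xs \<subseteq> R"
  shows "(if surv R Q c xs then path_prob R vol c xs else 0) =
    (\<Sum>a\<in>R. if surv R Q c (xs @ [a]) then path_prob R vol c (xs @ [a]) else 0)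
    + (if surv R Q c xs then path_prob R vol c xs * (pQ R vol Q (Ec c xs) / prop_tot R vol (Ec c xs)) else 0)"
proof (cases "surv R Q c xs")
  case False
  then show ?thesis by (simp add: surv_snoc[OF Qc])
next
  case True
  note sv = True
  show ?thesis
  proof (cases "path_prob R vol c xs = 0")
    case True
    have "(\<Sum>a\<in>R. if surv R Q c (xs @ [a]) then path_prob R vol c (xs @ [a]) else 0) = 0"
      by (rule sum.neutral) (simp add: path_prob_snoc True)
    then show ?thesis using True by simp
  next
    case False
    let ?d = "Ec c xs" and ?P = "path_prob R vol c xs"
    have dW: "?d \<in> W" using inv[OF xs sv False] .
    have pt: "0 < prop_tot R vol ?d" using W1[OF dW] .
    have "(\<Sum>a\<in>R. if surv R Q c (xs @ [a]) then path_prob R vol c (xs @ [a]) else 0)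
       = (\<Sum>a\<in>R. if a \<notin> Q then ?P * (propensity R vol ?d a / prop_tot R vol ?d) else 0)"
    proof (rule sum.cong)
      fix a assume a: "a \<in> R"
      show "(if surv R Q c (xs @ [a]) then path_prob R vol c (xs @ [a]) else 0)
         = (if a \<notin> Q then ?P * (propensity R vol ?d a / prop_tot R vol ?d) else 0)"
      proof (cases "a \<notin> Q \<and> propensity R vol ?d a \<noteq> 0")
        case True
        then have "apply_rxn a ?d \<in> W" using W2[OF dW a] prop_app by blast
        then show ?thesis using True sv by (simp add: surv_snoc[OF Qc] W3 path_prob_snoc)
      next
        case False
        then show ?thesis by (auto simp: surv_snoc[OF Qc] path_prob_snoc)
      qed
    qed simp
    also have "\<dots> = (\<Sum>a\<in>R - Q. ?P * (propensity R vol ?d a / prop_tot R vol ?d))"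
      using finR by (simp add: sum.If_cases Diff_eq Collect_neg_eq)
    also have "\<dots> = (\<Sum>a\<in>R. ?P * (propensity R vol ?d a / prop_tot R vol ?d))
        - (\<Sum>a\<in>Q. ?P * (propensity R vol ?d a / prop_tot R vol ?d))"
      using finR QR by (simp add: sum_diff finite_subset)
    also have "(\<Sum>a\<in>R. ?P * (propensity R vol ?d a / prop_tot R vol ?d)) = ?P"
      using pt by (simp add: sum_distrib_left[symmetric] sum_divide_distrib[symmetric] prop_tot_def)
    also have "(\<Sum>a\<in>Q. ?P * (propensity R vol ?d a / prop_tot R vol ?d)) = ?P * (pQ R vol Q ?d / prop_tot R vol ?d)"
      by (simp add: pQ_def sum_distrib_left[symmetric] sum_divide_distrib[symmetric])
    finally show ?thesis using sv by simp
  qed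
qed

lemma rec: "SSk R vol Q c k = SSk R vol Q c (Suc k) + DD R vol Q c k"
proof -
  have "SSk R vol Q c k = (\<Sum>xs\<in>Lk R k. (\<Sum>a\<in>R. if surv R Q c (xs @ [a]) then path_prob R vol c (xs @ [a]) else 0)
    + (if surv R Q c xs then path_prob R vol c xs * (pQ R vol Q (Ec c xs) / prop_tot R vol (Ec c xs)) else 0))"
    unfolding SSk_def by (rule sum.cong) (auto simp: Lk_def step_id)
  also have "\<dots> = SSk R vol Q c (Suc k) + DD R vol Q c k"
    by (simp add: sum.distrib SSk_def DD_def sum_Lk_Suc)
  finally show ?thesis .
qed

lemma SS0: "SSk R vol Q c 0 = 1"
  by (simp add: SSk_def Lk_0 surv_Nil path_prob_Nil)

lemma SS_nonneg: "0 \<le> SSk R vol Q c k"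
  unfolding SSk_def using vol by (auto intro!: sum_nonneg path_prob_nonneg)

lemma pQ_nonneg: "0 \<le> pQ R vol Q d"
  unfolding pQ_def using vol by (auto intro!: sum_nonneg prop_nonneg)

lemma DD_nonneg: "0 \<le> DD R vol Q c k"
  unfolding DD_def using vol
  by (auto intro!: sum_nonneg mult_nonneg_nonneg divide_nonneg_nonneg path_prob_nonneg pQ_nonneg pt_nonneg)

lemma UU_nonneg: "0 \<le> UU R vol Q c k"
  unfolding UU_def using vol
  by (auto intro!: sum_nonneg mult_nonneg_nonneg divide_nonneg_nonneg path_prob_nonneg pt_nonneg)

lemma telescope: "(\<Sum>k<K. DD R vol Q c k) = 1 - SSk R vol Q c K"
proof -
  have "(\<Sum>k<K. DD R vol Q c k) = (\<Sum>k<K. SSk R vol Q c k - SSk R vol Q c (Suc k))"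
  proof (rule sum.cong)
    fix k show "DD R vol Q c k = SSk R vol Q c k - SSk R vol Q c (Suc k)" using rec[of k] by simp
  qed simp
  also have "\<dots> = SSk R vol Q c 0 - SSk R vol Q c K" by (rule sum_lessThan_telescope')
  finally show ?thesis by (simp add: SS0)
qed

lemma upper:
  assumes q: "0 < qmin" and qW: "\<And>d. d \<in> W \<Longrightarrow> qmin \<le> pQ R vol Q d"
  shows "TC R vol Q c \<le> ennreal (1 / qmin)"
proof -
  have UD: "UU R vol Q c k \<le> DD R vol Q c k / qmin" for k
  proof -
    have "UU R vol Q c k \<le> (\<Sum>xs\<in>Lk R k. (if surv R Q c xs then path_prob R vol c xs * (pQ R vol Q (Ec c xs) / prop_tot R vol (Ec c xs)) else 0) / qmin)"
      unfolding UU_def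
    proof (rule sum_mono)
      fix xs assume xs: "xs \<in> Lk R k"
      show "(if surv R Q c xs then path_prob R vol c xs * (1 / prop_tot R vol (Ec c xs)) else 0)
        \<le> (if surv R Q c xs then path_prob R vol c xs * (pQ R vol Q (Ec c xs) / prop_tot R vol (Ec c xs)) else 0) / qmin"
      proof (cases "surv R Q c xs \<and> path_prob R vol c xs \<noteq> 0")
        case True
        then have dW: "Ec c xs \<in> W" using inv xs by (auto simp: Lk_def)
        have pt: "0 < prop_tot R vol (Ec c xs)" using W1[OF dW] .
        have P: "0 \<le> path_prob R vol c xs" using vol path_prob_nonneg by auto
        have "path_prob R vol c xs * (1 / prop_tot R vol (Ec c xs)) * qmin
              \<le> path_prob R vol c xs * (pQ R vol Q (Ec c xs) / prop_tot R vol (Ec c xs))"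
          using qW[OF dW] pt P by (simp add: divide_right_mono mult_left_mono)
        then have "path_prob R vol c xs * (1 / prop_tot R vol (Ec c xs)) * qmin / qmin
              \<le> path_prob R vol c xs * (pQ R vol Q (Ec c xs) / prop_tot R vol (Ec c xs)) / qmin"
          using q by (rule divide_right_mono[OF _ less_imp_le])
        then show ?thesis using True q by simp
      next
        case False then show ?thesis by auto
      qed
    qed
    also have "\<dots> = DD R vol Q c k / qmin" by (simp add: DD_def sum_divide_distrib)
    finally show ?thesis .
  qed
  have part: "(\<Sum>k<K. ennreal (UU R vol Q c k)) \<le> ennreal (1 / qmin)" for K
  proof -
    have "(\<Sum>k<K. UU R vol Q c k) \<le> (\<Sum>k<K. DD R vol Q c k / qmin)" by (rule sum_mono) (rule UD)
    also have "\<dots> = (1 - SSk R vol Q c K) / qmin" by (simp add: sum_divide_distrib[symmetric] telescope)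
    also have "\<dots> \<le> 1 / qmin" using SS_nonneg q by (simp add: divide_right_mono)
    finally show ?thesis using UU_nonneg by (simp add: ennreal_leI)
  qed
  show ?thesis unfolding TC_eq[OF less_imp_le[OF vol]]
    by (rule suminf_le_const) (auto intro: part)
qed

lemma lower:
  assumes q: "0 < qmax" and qW: "\<And>d. d \<in> W \<Longrightarrow> pQ R vol Q d \<le> qmax"
    and pW: "\<And>d. d \<in> W \<Longrightarrow> prop_tot R vol d \<le> ptmax"
  shows "ennreal (1 / (2 * qmax)) \<le> TC R vol Q c"
proof -
  have ptpos: "0 < ptmax" using W1[OF cW] pW[OF cW] by simp
  have DU: "DD R vol Q c k \<le> qmax * UU R vol Q c k" for k
  proof -
    have "DD R vol Q c k \<le> (\<Sum>xs\<in>Lk R k. qmax * (if surv R Q c xs then path_prob R vol c xs * (1 / prop_tot R vol (Ec c xs)) else 0))"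
      unfolding DD_def
    proof (rule sum_mono)
      fix xs assume xs: "xs \<in> Lk R k"
      show "(if surv R Q c xs then path_prob R vol c xs * (pQ R vol Q (Ec c xs) / prop_tot R vol (Ec c xs)) else 0)
        \<le> qmax * (if surv R Q c xs then path_prob R vol c xs * (1 / prop_tot R vol (Ec c xs)) else 0)"
      proof (cases "surv R Q c xs \<and> path_prob R vol c xs \<noteq> 0")
        case True
        then have dW: "Ec c xs \<in> W" using inv xs by (auto simp: Lk_def)
        have pt: "0 < prop_tot R vol (Ec c xs)" using W1[OF dW] .
        have P: "0 \<le> path_prob R vol c xs" using vol path_prob_nonneg by auto
        have "path_prob R vol c xs * (pQ R vol Q (Ec c xs) / prop_tot R vol (Ec c xs))
              \<le> path_prob R vol c xs * (qmax / prop_tot R vol (Ec c xs))"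
          using qW[OF dW] pt P by (simp add: divide_right_mono mult_left_mono)
        then show ?thesis using True by (simp add: algebra_simps)
      next
        case False then show ?thesis by auto
      qed
    qed
    also have "\<dots> = qmax * UU R vol Q c k" by (simp add: UU_def sum_distrib_left)
    finally show ?thesis .
  qed
  have US: "SSk R vol Q c k / ptmax \<le> UU R vol Q c k" for k
  proof -
    have "SSk R vol Q c k / ptmax = (\<Sum>xs\<in>Lk R k. (if surv R Q c xs then path_prob R vol c xs else 0) / ptmax)"
      by (simp add: SSk_def sum_divide_distrib)
    also have "\<dots> \<le> UU R vol Q c k"
      unfolding UU_def
    proof (rule sum_mono)
      fix xs assume xs: "xs \<in> Lk R k"
      show "(if surv R Q c xs then path_prob R vol c xs else 0) / ptmax
        \<le> (if surv R Q c xs then path_prob R vol c xs * (1 / prop_tot R vol (Ec c xs)) else 0)"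
      proof (cases "surv R Q c xs \<and> path_prob R vol c xs \<noteq> 0")
        case True
        then have dW: "Ec c xs \<in> W" using inv xs by (auto simp: Lk_def)
        have pt: "0 < prop_tot R vol (Ec c xs)" using W1[OF dW] .
        have P: "0 \<le> path_prob R vol c xs" using vol path_prob_nonneg by auto
        have "path_prob R vol c xs / ptmax \<le> path_prob R vol c xs / prop_tot R vol (Ec c xs)"
          using pW[OF dW] pt P by (simp add: divide_left_mono)
        then show ?thesis using True by simp
      next
        case False then show ?thesis by auto
      qed
    qed
    finally show ?thesis .
  qed
  have anti: "SSk R vol Q c K \<le> SSk R vol Q c k" if "k \<le> K" for k K
    using that
  proof (induction K)
    case 0 then show ?case by simp
  next
    case (Suc K)
    have "SSk R vol Q c (Suc K) \<le> SSk R vol Q c K" using rec[of K] DD_nonneg[of K] by linarith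
    then show ?case using Suc by (cases "k = Suc K") auto
  qed
  define K where "K = nat \<lceil>ptmax / qmax\<rceil>"
  have K: "ptmax / qmax \<le> real K" unfolding K_def by linarith
  let ?S = "SSk R vol Q c K"
  have S0: "0 \<le> ?S" by (rule SS_nonneg)
  have A: "(1 - ?S) / qmax \<le> (\<Sum>k<K. UU R vol Q c k)"
  proof -
    have "(1 - ?S) = (\<Sum>k<K. DD R vol Q c k)" by (simp add: telescope)
    also have "\<dots> \<le> (\<Sum>k<K. qmax * UU R vol Q c k)" by (rule sum_mono) (rule DU)
    finally show ?thesis using q by (simp add: sum_distrib_left[symmetric] pos_divide_le_eq mult.commute)
  qed
  have B: "?S / qmax \<le> (\<Sum>k<K. UU R vol Q c k)"
  proof -
    have "(\<Sum>k<K. ?S / ptmax) \<le> (\<Sum>k<K. UU R vol Q c k)"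
    proof (rule sum_mono)
      fix k assume "k \<in> {..<K}"
      then have "?S \<le> SSk R vol Q c k" using anti by simp
      then have "?S / ptmax \<le> SSk R vol Q c k / ptmax" using ptpos by (simp add: divide_right_mono)
      then show "?S / ptmax \<le> UU R vol Q c k" using US[of k] by linarith
    qed
    moreover have "?S / qmax \<le> real K * (?S / ptmax)"
    proof -
      have "?S / qmax = (ptmax / qmax) * (?S / ptmax)" using ptpos by simp
      also have "\<dots> \<le> real K * (?S / ptmax)" using K S0 ptpos by (intro mult_right_mono) auto
      finally show ?thesis .
    qed
    ultimately show ?thesis by simp
  qed
  have "1 / (2 * qmax) \<le> (\<Sum>k<K. UU R vol Q c k)"
  proof -
    have "1 / qmax = (1 - ?S) / qmax + ?S / qmax" by (simp add: diff_divide_distrib)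
    then show ?thesis using A B by simp
  qed
  also have "ennreal (\<Sum>k<K. UU R vol Q c k) = (\<Sum>k<K. ennreal (UU R vol Q c k))"
    using UU_nonneg by simp
  also have "\<dots> \<le> (\<Sum>k. ennreal (UU R vol Q c k))"
    by (rule sum_le_suminf) auto
  finally show ?thesis unfolding TC_eq[OF less_imp_le[OF vol]] by (simp add: ennreal_leI)
qed

end



lemma tau_gt: "enat (Suc t) \<le> tau R Q cs as t"
proof (cases "\<exists>s > t. tau_hit R Q cs as t s")
  case True
  then obtain s0 where s0: "s0 > t \<and> tau_hit R Q cs as t s0" by blast
  have "(LEAST s. s > t \<and> tau_hit R Q cs as t s) > t"
    by (rule LeastI2[of _ s0]) (use s0 in auto)
  moreover have "tau R Q cs as t = enat (LEAST s. s > t \<and> tau_hit R Q cs as t s)"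
    unfolding tau_def using True by (simp only: if_True)
  ultimately show ?thesis by simp
next
  case False
  then have "tau R Q cs as t = \<infinity>" unfolding tau_def by (simp only: if_False)
  then show ?thesis by simp
qed

lemma round_ge:
  assumes "skipping_policy \<sigma>"
  shows "enat i \<le> round_t R \<rho> \<sigma> cs as i"
proof (induction i)
  case 0 then show ?case by (simp add: zero_enat_def[symmetric])
next
  case (Suc i)
  show ?case
  proof (cases "round_t R \<rho> \<sigma> cs as i")
    case (enat t)
    then have "i \<le> t" using Suc by simp
    moreover have "t \<le> \<sigma> t" using assms by (simp add: skipping_policy_def)
    moreover have "enat (Suc (\<sigma> t)) \<le> tau R (\<rho> (cs (\<sigma> t))) cs as (\<sigma> t)" by (rule tau_gt)
    ultimately show ?thesis using enat by (simp add: order.trans[rotated])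
  next
    case infinity then show ?thesis by simp
  qed
qed

lemma istar_ex:
  assumes "skipping_policy \<sigma>"
  shows "enat tstar \<le> round_t R \<rho> \<sigma> cs as (LEAST i. enat tstar \<le> round_t R \<rho> \<sigma> cs as i)"
  by (rule LeastI[of _ tstar]) (rule round_ge[OF assms])

lemma RT_ge_first:
  assumes sk: "skipping_policy \<sigma>" and t0: "0 < stab_step S R I cs"
  shows "TC R (\<phi> (norm1 S (cs 0))) (\<rho> (cs (\<sigma> 0))) (cs (\<sigma> 0)) \<le> RT_exec S R I \<phi> \<rho> \<sigma> cs as"
proof -
  define tstar where "tstar = stab_step S R I cs"
  define istar where "istar = (LEAST i. enat tstar \<le> round_t R \<rho> \<sigma> cs as i)"
  have "enat tstar \<le> round_t R \<rho> \<sigma> cs as istar" unfolding istar_def by (rule istar_ex[OF sk])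
  have "istar \<noteq> 0"
  proof
    assume "istar = 0"
    then have "enat tstar \<le> enat 0" using \<open>enat tstar \<le> round_t R \<rho> \<sigma> cs as istar\<close>
      by (simp add: zero_enat_def)
    then show False using t0 unfolding tstar_def by simp
  qed
  then have sub: "{..<1} \<subseteq> {..<istar}" by auto
  let ?f = "\<lambda>i. (let e = cs (\<sigma> (the_enat (round_t R \<rho> \<sigma> cs as i))) in TC R (\<phi> (norm1 S (cs 0))) (\<rho> e) e)"
  have "(\<Sum>i<1. ?f i) \<le> (\<Sum>i<istar. ?f i)" by (rule sum_mono2[OF _ sub]) auto
  moreover have "(\<Sum>i<1. ?f i) = TC R (\<phi> (norm1 S (cs 0))) (\<rho> (cs (\<sigma> 0))) (cs (\<sigma> 0))"
    by (simp add: zero_enat_def Let_def)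
  ultimately show ?thesis unfolding RT_exec_def Let_def tstar_def istar_def by simp
qed

lemma tau_empty: "tau R {} cs as t = enat (Suc t)"
proof -
  have h: "tau_hit R {} cs as t (Suc t)" by (auto simp: tau_hit_def)
  have "(LEAST s. s > t \<and> tau_hit R {} cs as t s) = Suc t"
    by (rule Least_equality) (use h in auto)
  then show ?thesis using h by (auto simp: tau_def)
qed

lemma round_id:
  assumes "\<And>i. i \<le> M \<Longrightarrow> \<rho> (cs i) = {}"
  shows "i \<le> Suc M \<Longrightarrow> round_t R \<rho> (\<lambda>t. t) cs as i = enat i"
proof (induction i)
  case 0 then show ?case by (simp add: zero_enat_def)
next
  case (Suc i)
  then have "round_t R \<rho> (\<lambda>t. t) cs as i = enat i" by simp
  then show ?case using assms[of i] Suc.prems by (simp add: tau_empty)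
qed

lemma RT_ge_many:
  assumes em: "\<And>i. i \<le> M \<Longrightarrow> \<rho> (cs i) = {}" and ts: "stab_step S R I cs = Suc M"
  shows "(\<Sum>i\<le>M. TC R (\<phi> (norm1 S (cs 0))) {} (cs i)) \<le> RT_exec S R I \<phi> \<rho> (\<lambda>t. t) cs as"
proof -
  define istar where "istar = (LEAST i. enat (Suc M) \<le> round_t R \<rho> (\<lambda>t. t) cs as i)"
  have sk: "skipping_policy (\<lambda>t. t)" by (simp add: skipping_policy_def)
  have "enat (Suc M) \<le> round_t R \<rho> (\<lambda>t. t) cs as istar" unfolding istar_def by (rule istar_ex[OF sk])
  then have "M < istar" using round_id[where M=M and \<rho>=\<rho> and cs=cs and i=istar and R=R and as=as, OF em] by (cases "istar \<le> M") auto
  then have sub: "{..M} \<subseteq> {..<istar}" by auto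
  let ?f = "\<lambda>i. (let e = cs ((\<lambda>t. t) (the_enat (round_t R \<rho> (\<lambda>t. t) cs as i))) in TC R (\<phi> (norm1 S (cs 0))) (\<rho> e) e)"
  have "(\<Sum>i\<le>M. ?f i) \<le> (\<Sum>i<istar. ?f i)" by (rule sum_mono2[OF _ sub]) auto
  moreover have "(\<Sum>i\<le>M. ?f i) = (\<Sum>i\<le>M. TC R (\<phi> (norm1 S (cs 0))) {} (cs i))"
    by (rule sum.cong) (auto simp: round_id[where M=M and \<rho>=\<rho> and cs=cs and R=R and as=as, OF em] em)
  ultimately show ?thesis unfolding RT_exec_def Let_def istar_def ts by simp
qed



lemma prop_unit: "propensity R vol d (unitv A, p) = real (d A) / real (card (Rr R (unitv A)))"
  by (simp add: propensity_def Let_def)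

lemma prop_dbl: "propensity R vol d (dbl A, p) = (1 / vol) * real (d A choose 2) / real (card (Rr R (dbl A)))"
proof -
  have n1: "\<not> (\<exists>A'. dbl A = unitv A')" by simp
  have e2: "\<exists>A'. dbl A = (\<lambda>s. 2 * unitv A' s)" by (auto simp: dbl_def)
  have sm: "(SOME A'. dbl A = (\<lambda>s. 2 * unitv A' s)) = A"
    by (rule some_equality) (auto simp: dbl_def[symmetric])
  show ?thesis unfolding propensity_def Let_def fst_conv using n1 e2 sm by simp
qed

lemma pt_ge: "0 \<le> vol \<Longrightarrow> \<alpha> \<in> RR \<Longrightarrow> propensity RR vol d \<alpha> \<le> prop_tot RR vol d"
  unfolding prop_tot_def by (rule member_le_sum) (auto intro: prop_nonneg finite_RR)

lemma card_Rr: "\<alpha> \<in> RR \<Longrightarrow> 1 \<le> card (Rr RR (fst \<alpha>)) \<and> card (Rr RR (fst \<alpha>)) \<le> card RR"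
proof -
  assume a: "\<alpha> \<in> RR"
  have sub: "Rr RR (fst \<alpha>) \<subseteq> RR" by (auto simp: Rr_def)
  have fin: "finite (Rr RR (fst \<alpha>))" using finite_subset[OF sub finite_RR] .
  have "\<alpha> \<in> Rr RR (fst \<alpha>)" using a by (simp add: Rr_def)
  then have "card (Rr RR (fst \<alpha>)) \<noteq> 0" using fin by auto
  then show ?thesis using card_mono[OF finite_RR sub] by simp
qed

lemma cardRR_pos: "0 < card RR"
  using finite_RR NVs_in(1) card_gt_0_iff by blast

lemma prop_gam: "propensity RR vol d gam = (1 / vol) * real (d 1 choose 2) / real (card (Rr RR (dbl 1)))"
  unfolding gam_def by (rule prop_dbl)

lemma prop_gam_le: "0 < vol \<Longrightarrow> d 1 = 2 \<Longrightarrow> 0 < propensity RR vol d gam \<and> propensity RR vol d gam \<le> 1 / vol"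
proof -
  assume v: "0 < vol" and d: "d 1 = 2"
  have c: "1 \<le> card (Rr RR (dbl 1))" using card_Rr[OF NVs_in(5)] by (simp add: fst_rxns)
  have d': "d (Suc 0) = 2" using d by simp
  have "propensity RR vol d gam = (1 / vol) / real (card (Rr RR (dbl 1)))" by (simp add: prop_gam d d')
  moreover have "(1 / vol) / real (card (Rr RR (dbl 1))) \<le> 1 / vol"
    using c v by (simp add: divide_le_eq_1 field_simps)
  moreover have "0 < (1 / vol) / real (card (Rr RR (dbl 1)))" using c v by simp
  ultimately show ?thesis by simp
qed

lemma pt_pos_X: "0 < vol \<Longrightarrow> d 1 = 2 \<Longrightarrow> 0 < prop_tot RR vol d"
  using prop_gam_le pt_ge[of vol gam d] by fastforce

lemma pt_lb:
  assumes v: "0 < vol" and c: "is_config SS d"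
  shows "1 / real (card RR) \<le> prop_tot RR vol d"
proof -
  have "norm1 SS d \<noteq> 0" using c by (simp add: is_config_def)
  then obtain s where s: "s \<in> SS" "d s \<noteq> 0" unfolding norm1_def by (meson sum.neutral)
  have "Rr RR (unitv s) \<noteq> {}"
    using crn_RR s(1) supp_unitv norm1_unitv unfolding crn_def by auto
  then obtain \<alpha> where a: "\<alpha> \<in> RR" "fst \<alpha> = unitv s" by (auto simp: Rr_def)
  obtain p where ap: "\<alpha> = (unitv s, p)" using a by (cases \<alpha>) auto
  have cd: "1 \<le> card (Rr RR (unitv s))" "card (Rr RR (unitv s)) \<le> card RR" using card_Rr[OF a(1)] a(2) by auto
  have "1 / real (card RR) \<le> 1 / real (card (Rr RR (unitv s)))"
    using cd by (simp add: frac_le)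
  also have "\<dots> \<le> real (d s) / real (card (Rr RR (unitv s)))"
    using s(2) cd by (simp add: divide_right_mono)
  also have "\<dots> = propensity RR vol d \<alpha>" by (simp add: ap prop_unit)
  also have "\<dots> \<le> prop_tot RR vol d" using pt_ge[OF less_imp_le[OF v] a(1)] .
  finally show ?thesis .
qed

lemma TC_empty_le:
  assumes "0 < vol" "is_config SS d"
  shows "TC RR vol {} d \<le> ennreal (real (card RR))"
proof -
  have pt: "1 / real (card RR) \<le> prop_tot RR vol d" by (rule pt_lb[OF assms])
  have cp: "0 < real (card RR)" using cardRR_pos by simp
  have "1 / prop_tot RR vol d \<le> real (card RR)"
    using pt cp by (smt (verit) divide_pos_pos le_divide_eq_1_pos mult_imp_div_pos_le
        nonzero_mult_div_cancel_left divide_le_eq)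
  then show ?thesis using TC_empty[OF less_imp_le[OF assms(1)]] by (simp add: ennreal_leI)
qed

definition Q0 :: "rxn set" where "Q0 = {bet1, bet2, gam}"

lemma TC_upper_T:
  assumes v: "0 < vol" and e: "e \<in> {e1 m, e2 m}"
  shows "TC RR vol Q0 e \<le> ennreal (real (card RR))"
proof -
  interpret tcw RR vol Q0 e "{e1 m, e2 m}"
  proof
    show "finite RR" by (rule finite_RR)
    show "Q0 \<subseteq> RR" by (simp add: Q0_def)
    show "0 < vol" by (rule v)
    show "e \<in> {e1 m, e2 m}" by (rule e)
    fix d assume d: "d \<in> {e1 m, e2 m}"
    then show "0 < prop_tot RR vol d" using pt_pos_X[OF v] by auto
    show "Qapp RR Q0 d" using gam_app_T[of d m] d by (auto simp: Qapp_def Q0_def)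
    fix \<alpha> assume "\<alpha> \<in> RR" "\<alpha> \<notin> Q0" "fst \<alpha> \<le> d"
    then show "apply_rxn \<alpha> d \<in> {e1 m, e2 m}" using stepT[of \<alpha> d m] d by (auto simp: Q0_def)
  qed
  have cp: "0 < real (card RR)" using cardRR_pos by simp
  have q: "1 / real (card RR) \<le> pQ RR vol Q0 d" if d: "d \<in> {e1 m, e2 m}" for d
  proof -
    obtain b where b: "b \<in> Q0" "propensity RR vol d b = 1 / real (card (Rr RR (fst b)))" "b \<in> RR"
    proof (cases "d = e1 m")
      case True
      have "propensity RR vol d bet1 = 1 / real (card (Rr RR (fst bet1)))"
        using True by (simp add: bet1_def prop_unit)
      then show ?thesis by (rule that[of bet1, rotated]) (auto simp: Q0_def)
    next
      case False
      then have "d = e2 m" using d by auto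
      then have "propensity RR vol d bet2 = 1 / real (card (Rr RR (fst bet2)))"
        by (simp add: bet2_def prop_unit)
      then show ?thesis by (rule that[of bet2, rotated]) (auto simp: Q0_def)
    qed
    have "1 / real (card RR) \<le> 1 / real (card (Rr RR (fst b)))"
      using card_Rr[OF b(3)] by (simp add: frac_le)
    also have "\<dots> = propensity RR vol d b" using b(2) by simp
    also have "\<dots> \<le> pQ RR vol Q0 d" unfolding pQ_def
      by (rule member_le_sum) (use b(1) v in \<open>auto intro: prop_nonneg simp: Q0_def\<close>)
    finally show ?thesis .
  qed
  have "TC RR vol Q0 e \<le> ennreal (1 / (1 / real (card RR)))"
    by (rule upper) (use cp q in auto)
  then show ?thesis by simp
qed

lemma TC_lower_W:
  assumes v: "0 < vol" and e: "e \<in> {e1 m, e2 m}"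
  shows "ennreal (vol / 2) \<le> TC RR vol {gam} e"
proof -
  let ?W = "{e1 m, e2 m, fm m}"
  interpret tcw RR vol "{gam}" e ?W
  proof
    show "finite RR" by (rule finite_RR)
    show "{gam} \<subseteq> RR" by simp
    show "0 < vol" by (rule v)
    show "e \<in> ?W" using e by auto
    fix d assume d: "d \<in> ?W"
    then show "0 < prop_tot RR vol d" using pt_pos_X[OF v] by auto
    show "Qapp RR {gam} d" using gam_app_T[of d m] d by (auto simp: Qapp_def)
    fix \<alpha> assume "\<alpha> \<in> RR" "\<alpha> \<notin> {gam}" "fst \<alpha> \<le> d"
    then show "apply_rxn \<alpha> d \<in> ?W" using stepW[of \<alpha> d m] d by auto
  qed
  have q: "pQ RR vol {gam} d \<le> 1 / vol" if "d \<in> ?W" for d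
    using prop_gam_le[OF v, of d] that by (auto simp: pQ_def)
  have p: "prop_tot RR vol d \<le> prop_tot RR vol (e1 m) + prop_tot RR vol (e2 m) + prop_tot RR vol (fm m)"
    if "d \<in> ?W" for d
    using that pt_nonneg[of vol RR] v by (auto intro: add_increasing add_increasing2)
  have "ennreal (1 / (2 * (1 / vol))) \<le> TC RR vol {gam} e"
    by (rule lower[where ptmax = "prop_tot RR vol (e1 m) + prop_tot RR vol (e2 m) + prop_tot RR vol (fm m)"])
       (use v q p in auto)
  then show ?thesis by simp
qed



definition rho0 :: "conf \<Rightarrow> rxn set" where
  "rho0 c = (if c \<in> range e1 \<union> range e2 then Q0 else {})"

lemma Q0_NV: "Q0 \<subseteq> NV RR"
proof -
  have "fst bet1 \<noteq> snd bet1" "fst bet2 \<noteq> snd bet2" "fst gam \<noteq> snd gam"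
    by (simp_all add: bet1_def bet2_def gam_def)
  then show ?thesis using NVs_in unfolding Q0_def NV_def by blast
qed

lemma runtime_rho0: "runtime_policy SS RR rho0"
  using Q0_NV by (auto simp: runtime_policy_def rho0_def)

lemma stab_step_le:
  assumes "cs 0 \<in> range e1" "is_config SS (cs t)" "1 \<le> cs t 4"
  shows "stab_step SS RR II cs \<le> t"
  unfolding stab_step_def by (rule Least_le) (use stab_iff[OF assms(1,2)] assms(3) in simp)

lemma RT_exec_upper:
  assumes v: "0 < \<phi> (norm1 SS (cs 0))" and ex: "is_exec SS RR cs as" and c0: "cs 0 = e1 m"
    and sk: "skipping_policy \<sigma>"
  shows "RT_exec SS RR II \<phi> rho0 \<sigma> cs as \<le> ennreal (real (card RR))"
proof -
  define vol where "vol = \<phi> (norm1 SS (cs 0))"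
  define tstar where "tstar = stab_step SS RR II cs"
  define e0 where "e0 = cs (\<sigma> 0)"
  have r0: "cs 0 \<in> range e1" using c0 by simp
  have cfg: "\<And>t. is_config SS (cs t)" using ex by (simp add: is_exec_def)
  have r1: "round_t RR rho0 \<sigma> cs as 1 = tau RR (rho0 e0) cs as (\<sigma> 0)"
    by (simp add: e0_def zero_enat_def)
  have key: "enat tstar \<le> round_t RR rho0 \<sigma> cs as 1"
  proof (cases "\<exists>s > \<sigma> 0. tau_hit RR (rho0 e0) cs as (\<sigma> 0) s")
    case False
    then have "tau RR (rho0 e0) cs as (\<sigma> 0) = \<infinity>" unfolding tau_def by (simp only: if_False)
    then show ?thesis unfolding r1 by simp
  next
    case True
    define s where "s = (LEAST s. s > \<sigma> 0 \<and> tau_hit RR (rho0 e0) cs as (\<sigma> 0) s)"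
    have s: "s > \<sigma> 0 \<and> tau_hit RR (rho0 e0) cs as (\<sigma> 0) s"
      unfolding s_def using True by (metis (mono_tags, lifting) LeastI)
    have taus: "tau RR (rho0 e0) cs as (\<sigma> 0) = enat s" unfolding tau_def s_def using True by simp
    have "tstar \<le> s"
    proof (cases "1 \<le> e0 4")
      case True
      then have "tstar \<le> \<sigma> 0" unfolding tstar_def e0_def using stab_step_le[OF r0 cfg[of "\<sigma> 0"]] by blast
      then show ?thesis using s by simp
    next
      case False
      then have eT: "e0 \<in> {e1 m, e2 m}" using exec_inv[OF ex c0, of "\<sigma> 0"] by (auto simp: e0_def)
      then have rq: "rho0 e0 = Q0" by (auto simp: rho0_def)
      have "as (s - 1) \<in> Q0 \<or> (\<exists>u. \<sigma> 0 \<le> u \<and> u \<le> s \<and> (\<forall>\<beta>\<in>Q0. \<beta> \<notin> app RR (cs u)))"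
        using s rq by (simp add: tau_hit_def)
      then show ?thesis
      proof
        assume a: "as (s - 1) \<in> Q0"
        have sS: "Suc (s - 1) = s" using s by simp
        have "fst (as (s - 1)) \<le> cs (s - 1)" "cs (Suc (s - 1)) = apply_rxn (as (s - 1)) (cs (s - 1))"
          using ex by (auto simp: is_exec_def app_def)
        then have "1 \<le> cs s 4" using apply_Q0_Z[of "as (s - 1)" "cs (s - 1)"] a sS by (auto simp: Q0_def)
        then show ?thesis unfolding tstar_def using stab_step_le[OF r0 cfg[of s]] by blast
      next
        assume "\<exists>u. \<sigma> 0 \<le> u \<and> u \<le> s \<and> (\<forall>\<beta>\<in>Q0. \<beta> \<notin> app RR (cs u))"
        then obtain u where u: "u \<le> s" "\<forall>\<beta>\<in>Q0. \<beta> \<notin> app RR (cs u)" by blast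
        then have "cs u \<notin> {e1 m, e2 m}" using gam_app_T[of "cs u" m] by (auto simp: Q0_def)
        then have "1 \<le> cs u 4" using exec_inv[OF ex c0, of u] by auto
        then have "tstar \<le> u" unfolding tstar_def using stab_step_le[OF r0 cfg[of u]] by blast
        then show ?thesis using u by simp
      qed
    qed
    then show ?thesis using taus r1 by simp
  qed
  define istar where "istar = (LEAST i. enat tstar \<le> round_t RR rho0 \<sigma> cs as i)"
  have "istar \<le> 1" unfolding istar_def by (rule Least_le) (rule key)
  then have sub: "{..<istar} \<subseteq> {..<1}" by auto
  let ?f = "\<lambda>i. (let e = cs (\<sigma> (the_enat (round_t RR rho0 \<sigma> cs as i))) in TC RR vol (rho0 e) e)"
  have "(\<Sum>i<istar. ?f i) \<le> (\<Sum>i<1. ?f i)" by (rule sum_mono2[OF _ sub]) auto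
  also have "(\<Sum>i<1. ?f i) = TC RR vol (rho0 e0) e0"
    by (simp add: zero_enat_def Let_def e0_def)
  also have "\<dots> \<le> ennreal (real (card RR))"
  proof (cases "e0 \<in> range e1 \<union> range e2")
    case True
    then obtain m' where "e0 \<in> {e1 m', e2 m'}" by auto
    then show ?thesis using TC_upper_T[OF v[folded vol_def]] True by (simp add: rho0_def)
  next
    case False
    then show ?thesis using TC_empty_le[OF v[folded vol_def] cfg[of "\<sigma> 0"]] by (simp add: rho0_def e0_def)
  qed
  finally show ?thesis unfolding RT_exec_def Let_def vol_def tstar_def istar_def .
qed



lemma reach_e12: "reach RR (e1 m) (e2 m)" "reach RR (e2 m) (e1 m)"
proof -
  have "step RR (e1 m) (e2 m)"
    unfolding step_def by (rule bexI[of _ cyc1]) (auto simp: app_def app_rxns apply_rxns)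
  then show "reach RR (e1 m) (e2 m)" unfolding reach_def by auto
  have "step RR (e2 m) (e1 m)"
    unfolding step_def by (rule bexI[of _ cyc2]) (auto simp: app_def app_rxns apply_rxns)
  then show "reach RR (e2 m) (e1 m)" unfolding reach_def by auto
qed

lemma scc_e12:
  assumes "d \<in> {e1 m, e2 m}"
  shows "e1 m \<in> scc SS RR d" "e2 m \<in> scc SS RR d"
  using assms reach_e12[of m] config_confs unfolding scc_def reach_def by auto

lemma esc_sub:
  assumes d: "d \<in> {e1 m, e2 m}"
  shows "escaping SS RR d \<subseteq> {gam}"
proof
  fix \<alpha> assume "\<alpha> \<in> escaping SS RR d"
  then have a: "\<alpha> \<in> RR" and esc: "\<forall>c\<in>scc SS RR d. \<alpha> \<in> app RR c \<and> apply_rxn \<alpha> c \<notin> scc SS RR d"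
    by (auto simp: escaping_def escapes_def)
  have E1: "fst \<alpha> \<le> e1 m" "apply_rxn \<alpha> (e1 m) \<notin> scc SS RR d"
    using esc scc_e12(1)[OF d] by (auto simp: app_def)
  have E2: "fst \<alpha> \<le> e2 m" "apply_rxn \<alpha> (e2 m) \<notin> scc SS RR d"
    using esc scc_e12(2)[OF d] by (auto simp: app_def)
  show "\<alpha> \<in> {gam}"
    using RR_cases[OF a]
  proof
    assume "\<alpha> = cyc1 \<or> \<alpha> = cyc2 \<or> \<alpha> = bet1 \<or> \<alpha> = bet2 \<or> \<alpha> = gam"
    then show ?thesis using E1(1) E2(1) by (auto simp: app_rxns)
  next
    assume "\<exists>r. \<alpha> = (r, r) \<and> r \<in> Vd"
    then show ?thesis using E1 scc_e12(1)[OF d] by (auto simp: apply_void)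
  qed
qed

definition csK :: "nat \<Rightarrow> nat \<Rightarrow> nat \<Rightarrow> conf" where
  "csK K m t = (if t \<le> 2 * K then (if even t then e1 m else e2 m) else if t = Suc (2 * K) then fm m else gm m)"

definition asK :: "nat \<Rightarrow> rxn list \<Rightarrow> nat \<Rightarrow> rxn" where
  "asK K L t = (if t < 2 * K then (if even t then cyc1 else cyc2) else if t = 2 * K then bet1
     else if t = Suc (2 * K) then gam else L ! (t mod length L))"

lemma app_gm_ne: "app RR (gm m) \<noteq> {}"
proof -
  have S4: "4 \<in> SS" by (simp add: SS_def)
  have "unitv 4 \<in> Vd"
    using S4 by (auto simp: Vd_def RV_def supp_unitv norm1_unitv)
  then have "(unitv 4, unitv 4) \<in> RR" by (auto simp: RR_def)
  moreover have "unitv 4 \<le> gm m" by (simp add: unitv_le_iff)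
  ultimately show ?thesis by (auto simp: app_def)
qed

lemma exK:
  assumes L: "set L = app RR (gm m)"
  shows "is_exec SS RR (csK K m) (asK K L)" "weakly_fair RR (csK K m) (asK K L)"
    "csK K m 0 = e1 m" "stab_step SS RR II (csK K m) = Suc (2 * K)"
proof -
  have Lne: "L \<noteq> []" using L app_gm_ne[of m] by auto
  show "is_exec SS RR (csK K m) (asK K L)"
    unfolding is_exec_def
  proof (rule allI, rule conjI)
    fix t
    show "is_config SS (csK K m t)" by (simp add: csK_def config_confs)
    show "asK K L t \<in> app RR (csK K m t) \<and> csK K m (Suc t) = apply_rxn (asK K L t) (csK K m t)"
    proof (cases "t < 2 * K")
      case True
      then show ?thesis
        by (cases "even t") (auto simp: asK_def csK_def app_def app_rxns apply_rxns)
    next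
      case F1: False
      show ?thesis
      proof (cases "t = 2 * K")
        case True then show ?thesis by (auto simp: asK_def csK_def app_def app_rxns apply_rxns)
      next
        case F2: False
        show ?thesis
        proof (cases "t = Suc (2 * K)")
          case True then show ?thesis by (auto simp: asK_def csK_def app_def app_rxns apply_gam_fm)
        next
          case False
          have "L ! (t mod length L) \<in> set L" using Lne by simp
          then have m: "L ! (t mod length L) \<in> app RR (gm m)" using L by simp
          then have "apply_rxn (L ! (t mod length L)) (gm m) = gm m"
            using stepG by (auto simp: app_def)
          then show ?thesis using F1 F2 False m by (auto simp: asK_def csK_def)
        qed
      qed
    qed
  qed
  show "weakly_fair RR (csK K m) (asK K L)"
    unfolding weakly_fair_def
  proof (intro allI ballI)
    fix t \<alpha> assume "\<alpha> \<in> app RR (csK K m t)"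
    show "\<exists>s\<ge>t. asK K L s = \<alpha> \<or> \<alpha> \<notin> app RR (csK K m s)"
    proof (cases "\<alpha> \<in> app RR (gm m)")
      case True
      then obtain j where j: "j < length L" "L ! j = \<alpha>" using L by (metis in_set_conv_nth)
      define s where "s = (t + 2 * K + 2) * length L + j"
      have len: "1 \<le> length L" using Lne by (cases L) auto
      have "(t + 2 * K + 2) * 1 \<le> (t + 2 * K + 2) * length L" using len by (rule mult_le_mono2)
      then have h: "t + 2 * K + 2 \<le> (t + 2 * K + 2) * length L" by simp
      have st1: "t \<le> s" unfolding s_def using h by linarith
      have st2: "Suc (2 * K) < s" unfolding s_def using h by linarith
      note st = st1 st2
      have "s mod length L = j" unfolding s_def using j(1)
        by (metis mod_mult_self3 mod_less)
      then have "asK K L s = \<alpha>" using st j by (simp add: asK_def)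
      then show ?thesis using st by blast
    next
      case False
      have "csK K m (t + 2 * K + 2) = gm m" by (simp add: csK_def)
      then show ?thesis using False by (intro exI[of _ "t + 2 * K + 2"]) auto
    qed
  qed
  show c0: "csK K m 0 = e1 m" by (simp add: csK_def)
  have r0: "csK K m 0 \<in> range e1" using c0 by simp
  have st: "csK K m t \<in> stab RR (Z_I SS II (csK K m 0)) \<longleftrightarrow> Suc (2 * K) \<le> t" for t
    using stab_iff[OF r0, of "csK K m t"] by (auto simp: csK_def config_confs)
  show "stab_step SS RR II (csK K m) = Suc (2 * K)"
    unfolding stab_step_def st by (rule Least_equality) auto
qed



lemma lower_policy:
  assumes a: "0 < a" and vf: "\<And>n. 1 \<le> n \<Longrightarrow> a * real n \<le> \<phi> n" and n: "3 \<le> n"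
    and restr: "\<And>d. is_config SS d \<Longrightarrow> \<rho> d \<subseteq> escaping SS RR d"
  shows "ennreal (a / 2 * real n) \<le> (SUP x \<in> {(cs, as, \<sigma>). is_exec SS RR cs as \<and> weakly_fair RR cs as \<and> valid_init SS II (cs 0)
                  \<and> norm1 SS (cs 0) = n \<and> skipping_policy \<sigma>}.
          (case x of (cs, as, \<sigma>) \<Rightarrow> RT_exec SS RR II \<phi> \<rho> \<sigma> cs as))"
    (is "_ \<le> (SUP x \<in> ?E. ?F x)")
proof -
  define m where "m = n - 3"
  have nm: "norm1 SS (e1 m) = n" using n by (simp add: norm1_e1 m_def)
  define vol where "vol = \<phi> n"
  have vol: "a * real n \<le> vol" using vf n by (simp add: vol_def)
  have vpos: "0 < vol" using vol a n by (smt (verit) of_nat_0_less_iff mult_pos_pos le_trans zero_less_numeral le_numeral_extra(1) less_le_trans)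
  have "finite (app RR (gm m))" using finite_RR by (rule rev_finite_subset) (auto simp: app_def)
  then obtain L where L: "set L = app RR (gm m)" using finite_list by blast
  have r1: "\<rho> (e1 m) \<subseteq> {gam}" using restr[OF config_confs(1)] esc_sub[of "e1 m" m] by auto
  have r2: "\<rho> (e2 m) \<subseteq> {gam}" using restr[OF config_confs(2)] esc_sub[of "e2 m" m] by auto
  have memE: "(csK K m, asK K L, \<sigma>) \<in> ?E" if "skipping_policy \<sigma>" for K \<sigma>
    using exK[OF L, of K] that nm by (simp add: valid_init_iff)
  have ex: "\<exists>x\<in>?E. ennreal (a / 2 * real n) \<le> ?F x"
  proof -
    have goal_gam: "ennreal (a / 2 * real n) \<le> TC RR vol {gam} e" if "e \<in> {e1 m, e2 m}" for e
    proof -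
      have "ennreal (a / 2 * real n) \<le> ennreal (vol / 2)" using vol by (intro ennreal_leI) simp
      also have "\<dots> \<le> TC RR vol {gam} e" by (rule TC_lower_W[OF vpos that])
      finally show ?thesis .
    qed
    have nc: "norm1 SS (csK K m 0) = n" for K using exK(3)[OF L, of K] nm by simp
    show ?thesis
    proof (cases "\<rho> (e1 m) = {}")
      case False
      then have rg: "\<rho> (e1 m) = {gam}" using r1 by blast
      have sk: "skipping_policy (\<lambda>t. t)" by (simp add: skipping_policy_def)
      have "TC RR (\<phi> (norm1 SS (csK 1 m 0))) (\<rho> (csK 1 m ((\<lambda>t. t) 0))) (csK 1 m ((\<lambda>t. t) 0))
            \<le> RT_exec SS RR II \<phi> \<rho> (\<lambda>t. t) (csK 1 m) (asK 1 L)"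
        by (rule RT_ge_first[OF sk]) (simp add: exK(4)[OF L])
      moreover have "csK 1 m 0 = e1 m" by (simp add: csK_def)
      ultimately have "TC RR vol {gam} (e1 m) \<le> RT_exec SS RR II \<phi> \<rho> (\<lambda>t. t) (csK 1 m) (asK 1 L)"
        using rg nc[of 1] by (simp add: vol_def)
      then show ?thesis using memE[OF sk, of 1] goal_gam[of "e1 m"] by (intro bexI) (auto intro: order.trans)
    next
      case E1: True
      show ?thesis
      proof (cases "\<rho> (e2 m) = {}")
        case False
        then have rg: "\<rho> (e2 m) = {gam}" using r2 by blast
        have sk: "skipping_policy Suc" by (simp add: skipping_policy_def)
        have "TC RR (\<phi> (norm1 SS (csK 1 m 0))) (\<rho> (csK 1 m (Suc 0))) (csK 1 m (Suc 0))
              \<le> RT_exec SS RR II \<phi> \<rho> Suc (csK 1 m) (asK 1 L)"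
          by (rule RT_ge_first[OF sk]) (simp add: exK(4)[OF L])
        moreover have "csK 1 m (Suc 0) = e2 m" by (simp add: csK_def)
        ultimately have "TC RR vol {gam} (e2 m) \<le> RT_exec SS RR II \<phi> \<rho> Suc (csK 1 m) (asK 1 L)"
          using rg nc[of 1] by (simp add: vol_def)
        then show ?thesis using memE[OF sk, of 1] goal_gam[of "e2 m"] by (intro bexI) (auto intro: order.trans)
      next
        case E2: True
        define P where "P = prop_tot RR vol (e1 m) + prop_tot RR vol (e2 m)"
        have p1: "0 < prop_tot RR vol (e1 m)" "0 < prop_tot RR vol (e2 m)" using pt_pos_X[OF vpos] by auto
        have Ppos: "0 < P" using p1 by (simp add: P_def)
        define K where "K = nat \<lceil>a * real n * P\<rceil>"
        have K: "a * real n * P \<le> real K" unfolding K_def by linarith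
        have sk: "skipping_policy (\<lambda>t. t)" by (simp add: skipping_policy_def)
        have T: "csK K m i \<in> {e1 m, e2 m}" if "i \<le> 2 * K" for i using that by (simp add: csK_def)
        have em: "\<rho> (csK K m i) = {}" if "i \<le> 2 * K" for i using T[OF that] E1 E2 by auto
        have "(\<Sum>i\<le>2 * K. TC RR (\<phi> (norm1 SS (csK K m 0))) {} (csK K m i))
            \<le> RT_exec SS RR II \<phi> \<rho> (\<lambda>t. t) (csK K m) (asK K L)"
          by (rule RT_ge_many[where M="2 * K" and \<rho>=\<rho> and cs="csK K m", OF em]) (simp_all add: exK(4)[OF L])
        moreover have "(\<Sum>i\<le>2 * K. TC RR (\<phi> (norm1 SS (csK K m 0))) {} (csK K m i))
            = ennreal (\<Sum>i\<le>2 * K. 1 / prop_tot RR vol (csK K m i))"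
        proof -
          have "(\<Sum>i\<le>2 * K. TC RR (\<phi> (norm1 SS (csK K m 0))) {} (csK K m i))
              = (\<Sum>i\<le>2 * K. ennreal (1 / prop_tot RR vol (csK K m i)))"
            using nc[of K] vpos by (intro sum.cong) (auto simp: vol_def TC_empty)
          also have "\<dots> = ennreal (\<Sum>i\<le>2 * K. 1 / prop_tot RR vol (csK K m i))"
            using vpos by (intro sum_ennreal) (auto intro: pt_nonneg)
          finally show ?thesis .
        qed
        moreover have "a / 2 * real n \<le> (\<Sum>i\<le>2 * K. 1 / prop_tot RR vol (csK K m i))"
        proof -
          have each: "1 / P \<le> 1 / prop_tot RR vol (csK K m i)" if "i \<in> {..2 * K}" for i
          proof -
            have "csK K m i \<in> {e1 m, e2 m}" using that T by auto
            then have "0 < prop_tot RR vol (csK K m i)" "prop_tot RR vol (csK K m i) \<le> P"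
              using p1 by (auto simp: P_def)
            then show ?thesis by (simp add: frac_le)
          qed
          have "real K / P \<le> real (card {..2 * K}) * (1 / P)" using Ppos by (simp add: divide_right_mono)
          also have "\<dots> = (\<Sum>i\<le>2 * K. 1 / P)" by simp
          also have "\<dots> \<le> (\<Sum>i\<le>2 * K. 1 / prop_tot RR vol (csK K m i))" by (rule sum_mono) (rule each)
          finally have s: "real K / P \<le> (\<Sum>i\<le>2 * K. 1 / prop_tot RR vol (csK K m i))" .
          have "a * real n \<le> real K / P" using K Ppos by (simp add: pos_le_divide_eq)
          moreover have "a / 2 * real n \<le> a * real n" using a by simp
          ultimately show ?thesis using s by linarith
        qed
        ultimately have "ennreal (a / 2 * real n) \<le> RT_exec SS RR II \<phi> \<rho> (\<lambda>t. t) (csK K m) (asK K L)"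
          by (metis ennreal_leI order.trans)
        then show ?thesis using memE[OF sk, of K] by (intro bexI) auto
      qed
    qed
  qed
  then obtain x where x: "x \<in> ?E" "ennreal (a / 2 * real n) \<le> ?F x" by blast
  show ?thesis by (rule SUP_upper2[where f="?F", OF x(1) x(2)])
qed



lemma ln_ge1: "3 \<le> n \<Longrightarrow> 1 \<le> ln (real n)"
proof -
  assume n: "3 \<le> n"
  have "exp 1 \<le> (3::real)" using exp_le by simp
  also have "\<dots> \<le> real n" using n by simp
  finally have "exp 1 \<le> real n" .
  then have "ln (exp 1) \<le> ln (real n)" using n by (subst ln_le_cancel_iff) auto
  then show ?thesis by simp
qed

theorem proposition7p3:
  shows "\<exists>S R I. crn S R \<and> interface S I \<and> stably_correct S R I \<and>
    (\<forall>\<phi>. volume_fun \<phi> \<longrightarrow>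
       (\<exists>C N. \<forall>n \<ge> N. RT_stab S R I \<phi> (\<lambda>_. True) n \<le> ennreal (C * ln (real n)))
     \<and> (\<exists>c N. 0 < c \<and> (\<forall>n \<ge> N. ennreal (c * real n)
            \<le> RT_stab S R I \<phi> (\<lambda>\<rho>. \<forall>d. is_config S d \<longrightarrow> \<rho> d \<subseteq> escaping S R d) n)))"
proof (intro exI[of _ SS] exI[of _ RR] exI[of _ II] conjI allI impI)
  show "crn SS RR" by (rule crn_RR)
  show "interface SS II" by (rule interface_II)
  show "stably_correct SS RR II" by (rule stably_correct_RR)
  fix \<phi> assume "volume_fun \<phi>"
  then obtain a b where a: "0 < a" and ab: "\<And>n. 1 \<le> n \<Longrightarrow> a * real n \<le> \<phi> n \<and> \<phi> n \<le> b * real n"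
    unfolding volume_fun_def by blast
  have vf: "\<And>n. 1 \<le> n \<Longrightarrow> a * real n \<le> \<phi> n" using ab by blast
  show "\<exists>C N. \<forall>n \<ge> N. RT_stab SS RR II \<phi> (\<lambda>_. True) n \<le> ennreal (C * ln (real n))"
  proof (intro exI[of _ "real (card RR)"] exI[of _ 3] allI impI)
    fix n :: nat assume n: "3 \<le> n"
    have "RT_stab SS RR II \<phi> (\<lambda>_. True) n \<le> ennreal (real (card RR))"
      unfolding RT_stab_def
    proof (rule INF_lower2[of rho0])
      show "rho0 \<in> {\<rho>. runtime_policy SS RR \<rho> \<and> True}" using runtime_rho0 by simp
      show "(SUP x \<in> {(cs, as, \<sigma>). is_exec SS RR cs as \<and> weakly_fair RR cs as \<and> valid_init SS II (cs 0)
                  \<and> norm1 SS (cs 0) = n \<and> skipping_policy \<sigma>}.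
          (case x of (cs, as, \<sigma>) \<Rightarrow> RT_exec SS RR II \<phi> rho0 \<sigma> cs as)) \<le> ennreal (real (card RR))"
      proof (rule SUP_least, clarify)
        fix cs as \<sigma> assume H: "is_exec SS RR cs as" "weakly_fair RR cs as" "valid_init SS II (cs 0)"
          "n = norm1 SS (cs 0)" "skipping_policy \<sigma>"
        obtain m where c0: "cs 0 = e1 m" using H(3) by (auto simp: valid_init_iff)
        have "0 < \<phi> (norm1 SS (cs 0))"
          using vf[of n] n a H(4)[symmetric] by (smt (verit) of_nat_le_iff mult_pos_pos of_nat_0_less_iff
              le_trans one_le_numeral less_le_trans zero_less_one)
        then show "RT_exec SS RR II \<phi> rho0 \<sigma> cs as \<le> ennreal (real (card RR))"
          using RT_exec_upper[OF _ H(1) c0 H(5)] by blast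
      qed
    qed
    also have "\<dots> \<le> ennreal (real (card RR) * ln (real n))"
      using ln_ge1[OF n] by (intro ennreal_leI) (simp add: mult_le_cancel_left1)
    finally show "RT_stab SS RR II \<phi> (\<lambda>_. True) n \<le> ennreal (real (card RR) * ln (real n))" .
  qed
  show "\<exists>c N. 0 < c \<and> (\<forall>n \<ge> N. ennreal (c * real n)
            \<le> RT_stab SS RR II \<phi> (\<lambda>\<rho>. \<forall>d. is_config SS d \<longrightarrow> \<rho> d \<subseteq> escaping SS RR d) n)"
  proof (intro exI[of _ "a / 2"] exI[of _ 3] conjI allI impI)
    show "0 < a / 2" using a by simp
    fix n :: nat assume n: "3 \<le> n"
    show "ennreal (a / 2 * real n) \<le> RT_stab SS RR II \<phi> (\<lambda>\<rho>. \<forall>d. is_config SS d \<longrightarrow> \<rho> d \<subseteq> escaping SS RR d) n"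
      unfolding RT_stab_def
    proof (rule INF_greatest)
      fix \<rho> assume "\<rho> \<in> {\<rho>. runtime_policy SS RR \<rho> \<and> (\<forall>d. is_config SS d \<longrightarrow> \<rho> d \<subseteq> escaping SS RR d)}"
      then have restr: "\<And>d. is_config SS d \<Longrightarrow> \<rho> d \<subseteq> escaping SS RR d" by blast
      show "ennreal (a / 2 * real n) \<le> (SUP x \<in> {(cs, as, \<sigma>). is_exec SS RR cs as \<and> weakly_fair RR cs as \<and> valid_init SS II (cs 0)
                  \<and> norm1 SS (cs 0) = n \<and> skipping_policy \<sigma>}.
          (case x of (cs, as, \<sigma>) \<Rightarrow> RT_exec SS RR II \<phi> \<rho> \<sigma> cs as))"
        by (rule lower_policy[OF a vf n restr])
    qed
  qed
qed


end
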